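(* Let $l\ge 3$, $\mathfrak g=\mathfrak{sl}_{l+1}(\mathbb C)$, $v'_{l,1}=e_{\epsilon_1-\epsilon_{l+1}}e_{\epsilon_2-\epsilon_l}-e_{\epsilon_2-\epsilon_{l+1}}e_{\epsilon_1-\epsilon_l}\in U(\mathfrak g)$, $R$ the adjoint $\mathfrak g$-submodule of $U(\mathfrak g)$ generated by $v'_{l,1}$, $R_0$ its zero-weight subspace, and $\mathcal P_0=\{p_r : r\in R_0\}$. Then the polynomials $p_{ij}(h)=h_ih_j$ ($i=1,\dots,l-2$, $i+2\le j\le l$) and $q_i(h)=h_i(h_{i-1}+h_i+h_{i+1}+1)$ ($i=2,\dots,l-1$) form a basis of the vector space $\mathcal P_0$.
   Context: $\mathfrak g=\mathfrak{sl}_{l+1}(\mathbb C)$ with Cartan subalgebra $\mathfrak h$ of traceless diagonal matrices, triangular decomposition $\mathfrak g=\mathfrak n_-\oplus\mathfrak h\oplus\mathfrak n_+$ ($\mathfrak n_+$ strictly upper triangular), simple roots $\alpha_i=\epsilon_i-\epsilon_{i+1}$. For $i<j$: $e_{\epsilon_i-\epsilon_j}=(-1)^{j-i-1}E_{ij}$, $f_{\epsilon_i-\epsilon_j}=(-1)^{j-i-1}E_{ji}$, $h_{\epsilon_i-\epsilon_j}=E_{ii}-E_{jj}$, $h_i=h_{\alpha_i}$. The adjoint action is $X_L f=[X,f]$. For $r\in R_0$, $p_r$ denotes the unique element of $S(\mathfrak h)=\mathbb C[h_1,\dots,h_l]$ with $r-p_r\in U(\mathfrak g)\mathfrak n_+$;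 equivalently $r v_\mu=p_r(\mu)v_\mu$ for every highest weight vector $v_\mu$ of weight $\mu$. *)

theory Defs
  imports Complex_Main
begin

text \<open>Model of U(sl_{n}) (n = l+1): the monoid algebra of the free monoid on the set
  sl_n (words of matrices), i.e. finitely supported functions on words, modulo the
  two-sided ideal generated by the linearity relations and XY - YX - [X,Y].
  Matrices are functions nat => nat => complex supported on indices 1..n.\<close>

type_synonym mat = "nat \<Rightarrow> nat \<Rightarrow> complex"
type_synonym fa = "mat list \<Rightarrow> complex"

definition mmul :: "nat \<Rightarrow> mat \<Rightarrow> mat \<Rightarrow> mat" where
  "mmul n A B = (\<lambda>a b. \<Sum>k=1..n. A a k * B k b)"

definition mbr :: "nat \<Rightarrow> mat \<Rightarrow> mat \<Rightarrow> mat" where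
  "mbr n A B = (\<lambda>a b. mmul n A B a b - mmul n B A a b)"

definition madd :: "mat \<Rightarrow> mat \<Rightarrow> mat" where
  "madd A B = (\<lambda>a b. A a b + B a b)"

definition msmul :: "complex \<Rightarrow> mat \<Rightarrow> mat" where
  "msmul c A = (\<lambda>a b. c * A a b)"

definition Eu :: "nat \<Rightarrow> nat \<Rightarrow> mat" where
  "Eu i j = (\<lambda>a b. if a = i \<and> b = j then 1 else 0)"

definition g_set :: "nat \<Rightarrow> mat set" where
  "g_set n = {A. (\<forall>a b. A a b \<noteq> 0 \<longrightarrow> a \<in> {1..n} \<and> b \<in> {1..n}) \<and> (\<Sum>k=1..n. A k k) = 0}"

definition h_set :: "nat \<Rightarrow> mat set" where
  "h_set n = {A \<in> g_set n. \<forall>a b. a \<noteq> b \<longrightarrow> A a b = 0}"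

definition np_set :: "nat \<Rightarrow> mat set" where
  "np_set n = {A \<in> g_set n. \<forall>a b. A a b \<noteq> 0 \<longrightarrow> a < b}"

definition fa_mul :: "fa \<Rightarrow> fa \<Rightarrow> fa" where
  "fa_mul f g = (\<lambda>w. \<Sum>k\<le>length w. f (take k w) * g (drop k w))"

definition fa_add :: "fa \<Rightarrow> fa \<Rightarrow> fa" where
  "fa_add f g = (\<lambda>w. f w + g w)"

definition fa_diff :: "fa \<Rightarrow> fa \<Rightarrow> fa" where
  "fa_diff f g = (\<lambda>w. f w - g w)"

definition fa_smul :: "complex \<Rightarrow> fa \<Rightarrow> fa" where
  "fa_smul c f = (\<lambda>w. c * f w)"

definition ltr :: "mat \<Rightarrow> fa" where
  "ltr A = (\<lambda>w. if w = [A] then 1 else 0)"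

definition FA :: "nat \<Rightarrow> fa set" where
  "FA n = {f. finite {w. f w \<noteq> 0} \<and> (\<forall>w. f w \<noteq> 0 \<longrightarrow> set w \<subseteq> g_set n)}"

inductive_set Iid :: "nat \<Rightarrow> fa set" for n where
  lin_add: "X \<in> g_set n \<Longrightarrow> Y \<in> g_set n \<Longrightarrow>
     (\<lambda>w. ltr (madd X Y) w - ltr X w - ltr Y w) \<in> Iid n"
| lin_smul: "X \<in> g_set n \<Longrightarrow> (\<lambda>w. ltr (msmul c X) w - c * ltr X w) \<in> Iid n"
| comm: "X \<in> g_set n \<Longrightarrow> Y \<in> g_set n \<Longrightarrow>
     (\<lambda>w. fa_mul (ltr X) (ltr Y) w - fa_mul (ltr Y) (ltr X) w - ltr (mbr n X Y) w) \<in> Iid n"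
| zero: "(\<lambda>w. 0) \<in> Iid n"
| add: "a \<in> Iid n \<Longrightarrow> b \<in> Iid n \<Longrightarrow> fa_add a b \<in> Iid n"
| smul: "a \<in> Iid n \<Longrightarrow> fa_smul c a \<in> Iid n"
| lmul: "a \<in> Iid n \<Longrightarrow> f \<in> FA n \<Longrightarrow> fa_mul f a \<in> Iid n"
| rmul: "a \<in> Iid n \<Longrightarrow> f \<in> FA n \<Longrightarrow> fa_mul a f \<in> Iid n"

text \<open>Preimage in the free algebra of U(g) n_+ (it contains the ideal).\<close>
inductive_set Jn :: "nat \<Rightarrow> fa set" for n where
  ideal: "a \<in> Iid n \<Longrightarrow> a \<in> Jn n"
| gen: "f \<in> FA n \<Longrightarrow> E \<in> np_set n \<Longrightarrow> fa_mul f (ltr E) \<in> Jn n"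
| zero: "(\<lambda>w. 0) \<in> Jn n"
| add: "a \<in> Jn n \<Longrightarrow> b \<in> Jn n \<Longrightarrow> fa_add a b \<in> Jn n"
| smul: "a \<in> Jn n \<Longrightarrow> fa_smul c a \<in> Jn n"

definition ad :: "mat \<Rightarrow> fa \<Rightarrow> fa" where
  "ad X f = fa_diff (fa_mul (ltr X) f) (fa_mul f (ltr X))"

text \<open>Root vectors e_{eps_i - eps_j} = (-1)^(j-i-1) E_ij for i < j.\<close>
definition eroot :: "nat \<Rightarrow> nat \<Rightarrow> mat" where
  "eroot i j = msmul ((-1) ^ (j - i - 1)) (Eu i j)"

definition vprime :: "nat \<Rightarrow> fa" where
  "vprime l = fa_diff (fa_mul (ltr (eroot 1 (l+1))) (ltr (eroot 2 l)))
                      (fa_mul (ltr (eroot 2 (l+1))) (ltr (eroot 1 l)))"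

text \<open>Preimage in the free algebra of the adjoint submodule R generated by v'_{l,1}.\<close>
inductive_set Rt :: "nat \<Rightarrow> fa set" for l where
  gen: "vprime l \<in> Rt l"
| ideal: "a \<in> Iid (l+1) \<Longrightarrow> a \<in> Rt l"
| add: "a \<in> Rt l \<Longrightarrow> b \<in> Rt l \<Longrightarrow> fa_add a b \<in> Rt l"
| smul: "a \<in> Rt l \<Longrightarrow> fa_smul c a \<in> Rt l"
| adj: "X \<in> g_set (l+1) \<Longrightarrow> a \<in> Rt l \<Longrightarrow> ad X a \<in> Rt l"

definition R0 :: "nat \<Rightarrow> fa set" where
  "R0 l = {r \<in> Rt l. \<forall>H \<in> h_set (l+1). ad H r \<in> Iid (l+1)}"

text \<open>Representatives of S(h) = U(h): combinations of words in h.\<close>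
definition Sh :: "nat \<Rightarrow> fa set" where
  "Sh n = {p \<in> FA n. \<forall>w. p w \<noteq> 0 \<longrightarrow> set w \<subseteq> h_set n}"

text \<open>A weight mu is given by its coordinates x k = mu(h_k), k = 1..l; then
  mu(H) = sum_k (sum_{j<=k} H_jj) x_k for traceless diagonal H.\<close>
definition hval :: "nat \<Rightarrow> (nat \<Rightarrow> complex) \<Rightarrow> mat \<Rightarrow> complex" where
  "hval l x H = (\<Sum>k=1..l. (\<Sum>j=1..k. H j j) * x k)"

definition evalS :: "nat \<Rightarrow> (nat \<Rightarrow> complex) \<Rightarrow> fa \<Rightarrow> complex" where
  "evalS l x p = (\<Sum>w\<in>{w. p w \<noteq> 0}. p w * prod_list (map (hval l x) w))"

definition P0 :: "nat \<Rightarrow> ((nat \<Rightarrow> complex) \<Rightarrow> complex) set" where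
  "P0 l = {f. \<exists>r \<in> R0 l. \<exists>p \<in> Sh (l+1). fa_diff r p \<in> Jn (l+1) \<and> f = (\<lambda>x. evalS l x p)}"

datatype idx = Pidx nat nat | Qidx nat

definition Ind :: "nat \<Rightarrow> idx set" where
  "Ind l = {Pidx i j | i j. 1 \<le> i \<and> i \<le> l - 2 \<and> i + 2 \<le> j \<and> j \<le> l}
         \<union> {Qidx i | i. 2 \<le> i \<and> i \<le> l - 1}"

fun bfun :: "idx \<Rightarrow> (nat \<Rightarrow> complex) \<Rightarrow> complex" where
  "bfun (Pidx i j) h = h i * h j"
| "bfun (Qidx i) h = h i * (h (i - 1) + h i + h (i + 1) + 1)"

end

theory Submission
  imports Defs
begin


definition dl :: "mat list \<Rightarrow> fa" where "dl u = (\<lambda>w. if w = u then 1 else 0)"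
definition fin :: "fa \<Rightarrow> bool" where "fin f \<longleftrightarrow> finite {w. f w \<noteq> 0}"

lemma ltr_dl: "ltr X = dl [X]" by (simp add: ltr_def dl_def)

lemma fa_mul_dl: "fa_mul (dl u) (dl v) = dl (u @ v)"
proof
  fix w
  have "fa_mul (dl u) (dl v) w = (\<Sum>k\<le>length w. if k = length u \<and> w = u @ v then 1 else 0)"
    unfolding fa_mul_def dl_def
    apply (rule sum.cong, simp)
    by (auto simp: min_def)
  also have "\<dots> = dl (u @ v) w" by (auto simp: dl_def)
  finally show "fa_mul (dl u) (dl v) w = dl (u @ v) w" .
qed

lemma fa_mul_lin_left: "fa_mul (\<lambda>w. a * f w + b * g w) h = (\<lambda>w. a * fa_mul f h w + b * fa_mul g h w)"
  by (simp add: fa_mul_def sum.distrib sum_distrib_left algebra_simps)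
lemma fa_mul_lin_right: "fa_mul h (\<lambda>w. a * f w + b * g w) = (\<lambda>w. a * fa_mul h f w + b * fa_mul h g w)"
  by (simp add: fa_mul_def sum.distrib sum_distrib_left algebra_simps)
lemma fa_mul_add_left: "fa_mul (\<lambda>w. f w + g w) h = (\<lambda>w. fa_mul f h w + fa_mul g h w)"
  by (simp add: fa_mul_def sum.distrib algebra_simps)
lemma fa_mul_add_right: "fa_mul h (\<lambda>w. f w + g w) = (\<lambda>w. fa_mul h f w + fa_mul h g w)"
  by (simp add: fa_mul_def sum.distrib algebra_simps)
lemma fa_mul_diff_left: "fa_mul (\<lambda>w. f w - g w) h = (\<lambda>w. fa_mul f h w - fa_mul g h w)"
  by (simp add: fa_mul_def sum_subtractf algebra_simps)
lemma fa_mul_diff_right: "fa_mul h (\<lambda>w. f w - g w) = (\<lambda>w. fa_mul h f w - fa_mul h g w)"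
  by (simp add: fa_mul_def sum_subtractf algebra_simps)
lemma fa_mul_smul_left: "fa_mul (\<lambda>w. a * f w) h = (\<lambda>w. a * fa_mul f h w)"
  by (simp add: fa_mul_def sum_distrib_left algebra_simps)
lemma fa_mul_smul_right: "fa_mul h (\<lambda>w. a * f w) = (\<lambda>w. a * fa_mul h f w)"
  by (simp add: fa_mul_def sum_distrib_left algebra_simps)
lemma fa_mul_zero_left: "fa_mul (\<lambda>w. 0) h = (\<lambda>w. 0)" by (simp add: fa_mul_def)
lemma fa_mul_zero_right: "fa_mul h (\<lambda>w. 0) = (\<lambda>w. 0)" by (simp add: fa_mul_def)

lemma fa_mul_supp:
  "{w. fa_mul f g w \<noteq> 0} \<subseteq> (\<lambda>(u,v). u @ v) ` ({w. f w \<noteq> 0} \<times> {w. g w \<noteq> 0})"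
proof
  fix w assume "w \<in> {w. fa_mul f g w \<noteq> 0}"
  then have "(\<Sum>k\<le>length w. f (take k w) * g (drop k w)) \<noteq> 0" by (simp add: fa_mul_def)
  then obtain k where "f (take k w) * g (drop k w) \<noteq> 0" by (meson sum.not_neutral_contains_not_neutral)
  then show "w \<in> (\<lambda>(u,v). u @ v) ` ({w. f w \<noteq> 0} \<times> {w. g w \<noteq> 0})"
    by (intro image_eqI[of _ _ "(take k w, drop k w)"]) auto
qed

lemma fin_mul: "fin f \<Longrightarrow> fin g \<Longrightarrow> fin (fa_mul f g)"
  unfolding fin_def using fa_mul_supp[of f g] by (rule finite_subset) auto
lemma fin_dl: "fin (dl u)" by (simp add: fin_def dl_def)
lemma fin_ltr: "fin (ltr X)" by (simp add: ltr_dl fin_dl)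
lemma fin_zero: "fin (\<lambda>w. 0)" by (simp add: fin_def)
lemma fin_lin: "fin f \<Longrightarrow> fin g \<Longrightarrow> fin (\<lambda>w. a * f w + b * g w)"
  unfolding fin_def by (rule finite_subset[of _ "{w. f w \<noteq> 0} \<union> {w. g w \<noteq> 0}"]) auto
lemma fin_add: "fin f \<Longrightarrow> fin g \<Longrightarrow> fin (\<lambda>w. f w + g w)"
  unfolding fin_def by (rule finite_subset[of _ "{w. f w \<noteq> 0} \<union> {w. g w \<noteq> 0}"]) auto
lemma fin_diff: "fin f \<Longrightarrow> fin g \<Longrightarrow> fin (\<lambda>w. f w - g w)"
  unfolding fin_def by (rule finite_subset[of _ "{w. f w \<noteq> 0} \<union> {w. g w \<noteq> 0}"]) auto
lemma fin_smul: "fin f \<Longrightarrow> fin (\<lambda>w. a * f w)"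
  unfolding fin_def by (rule finite_subset[of _ "{w. f w \<noteq> 0}"]) auto

lemma FA_fin: "f \<in> FA n \<Longrightarrow> fin f" by (simp add: FA_def fin_def)

lemma Iid_fin: "a \<in> Iid n \<Longrightarrow> fin a"
  by (induction rule: Iid.induct)
     (auto simp: fin_diff fin_ltr fin_mul fin_zero fin_add fin_smul FA_fin fa_add_def fa_smul_def)

lemma Jn_fin: "a \<in> Jn n \<Longrightarrow> fin a"
  by (induction rule: Jn.induct)
     (auto simp: Iid_fin fin_ltr fin_mul fin_zero fin_add fin_smul FA_fin fa_add_def fa_smul_def)

lemma vprime_fin: "fin (vprime l)"
  by (simp add: vprime_def fa_diff_def fin_diff fin_mul fin_ltr)

lemma ad_fin: "fin a \<Longrightarrow> fin (ad X a)"
  by (simp add: ad_def fa_diff_def fin_diff fin_mul fin_ltr)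

lemma Rt_fin: "a \<in> Rt l \<Longrightarrow> fin a"
  by (induction rule: Rt.induct)
     (auto simp: Iid_fin vprime_fin ad_fin fin_add fin_smul fa_add_def fa_smul_def)


type_synonym st = "nat \<times> nat \<Rightarrow> complex"
type_synonym vec = "st \<Rightarrow> complex"

definition Xop :: "(nat \<times> nat \<Rightarrow> bool) \<Rightarrow> nat \<times> nat \<Rightarrow> vec \<Rightarrow> vec" where
  "Xop B e f = (\<lambda>x. if B e then (x e + 1) * f (x(e := x e + 1)) else f (x(e := x e - 1)))"
definition Dop :: "(nat \<times> nat \<Rightarrow> bool) \<Rightarrow> nat \<times> nat \<Rightarrow> vec \<Rightarrow> vec" where
  "Dop B e f = (\<lambda>x. if B e then - f (x(e := x e - 1)) else (x e + 1) * f (x(e := x e + 1)))"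

definition lin :: "(vec \<Rightarrow> vec) \<Rightarrow> bool" where
  "lin T \<longleftrightarrow> (\<forall>a b f g. T (\<lambda>x. a * f x + b * g x) = (\<lambda>x. a * T f x + b * T g x))"

lemma lin_Xop: "lin (Xop B e)" by (auto simp: lin_def Xop_def fun_eq_iff algebra_simps)
lemma lin_Dop: "lin (Dop B e)" by (auto simp: lin_def Dop_def fun_eq_iff algebra_simps)

lemma lin_zero: "lin T \<Longrightarrow> T (\<lambda>x. 0) = (\<lambda>x. 0)"
  unfolding lin_def by (drule spec[of _ 0], drule spec[of _ 0]) auto
lemma lin_add: "lin T \<Longrightarrow> T (\<lambda>x. f x + g x) = (\<lambda>x. T f x + T g x)"
  unfolding lin_def by (drule spec[of _ 1], drule spec[of _ 1]) auto
lemma lin_smul: "lin T \<Longrightarrow> T (\<lambda>x. a * f x) = (\<lambda>x. a * T f x)"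
proof -
  assume "lin T"
  then have "T (\<lambda>x. a * f x + 0 * f x) = (\<lambda>x. a * T f x + 0 * T f x)" unfolding lin_def by blast
  then show ?thesis by simp
qed
lemma lin_diff: "lin T \<Longrightarrow> T (\<lambda>x. f x - g x) = (\<lambda>x. T f x - T g x)"
proof -
  assume "lin T"
  then have "T (\<lambda>x. 1 * f x + (-1) * g x) = (\<lambda>x. 1 * T f x + (-1) * T g x)" unfolding lin_def by blast
  then show ?thesis by simp
qed
lemma lin_sum: "lin T \<Longrightarrow> T (\<lambda>x. \<Sum>i\<in>S. g i x) = (\<lambda>x. \<Sum>i\<in>S. T (g i) x)"
proof (induction S rule: infinite_finite_induct)
  case (infinite S) then show ?case by (simp add: lin_zero)
next
  case empty then show ?case by (simp add: lin_zero)
next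
  case (insert s S)
  then show ?case by (simp add: lin_add[OF insert.prems, where f="g s" and g="\<lambda>x. \<Sum>i\<in>S. g i x"])
qed
lemma lin_comp: "lin T \<Longrightarrow> lin U \<Longrightarrow> lin (\<lambda>f. T (U f))"
  unfolding lin_def by simp
lemma lin_id: "lin (\<lambda>f. f)" unfolding lin_def by simp

lemma XX: "Xop B e (Xop B e' f) = Xop B e' (Xop B e f)"
  by (cases "e = e'") (auto simp: Xop_def fun_eq_iff fun_upd_twist algebra_simps)
lemma DD: "Dop B e (Dop B e' f) = Dop B e' (Dop B e f)"
  by (cases "e = e'") (auto simp: Dop_def fun_eq_iff fun_upd_twist algebra_simps)
lemma DX: "Dop B e (Xop B e' f) = (\<lambda>x. Xop B e' (Dop B e f) x + (if e = e' then f x else 0))"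
  by (cases "e = e'") (auto simp: Dop_def Xop_def fun_eq_iff fun_upd_twist algebra_simps)

definition opE :: "nat \<Rightarrow> (nat \<times> nat \<Rightarrow> bool) \<Rightarrow> nat \<Rightarrow> nat \<Rightarrow> vec \<Rightarrow> vec" where
  "opE K B a b f = (\<lambda>x. \<Sum>k<K. Xop B (k,a) (Dop B (k,b) f) x)"

lemma lin_opE: "lin (opE K B a b)"
  unfolding lin_def opE_def
  by (simp add: lin_add[OF lin_Xop] lin_add[OF lin_Dop] lin_smul[OF lin_Xop] lin_smul[OF lin_Dop]
      sum.distrib sum_distrib_left)

lemma opE_comm:
  "opE K B a b (opE K B c d f) = (\<lambda>x. opE K B c d (opE K B a b f) x
      + (if b = c then opE K B a d f x else 0) - (if d = a then opE K B c b f x else 0))"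
proof
  fix x
  define T where "T k k' = Xop B (k,a) (Xop B (k',c) (Dop B (k,b) (Dop B (k',d) f))) x" for k k'
  have L: "opE K B a b (opE K B c d f) x = (\<Sum>k<K. \<Sum>k'<K. T k k') + (if b = c then opE K B a d f x else 0)"
  proof -
    have "opE K B a b (opE K B c d f) x = (\<Sum>k<K. \<Sum>k'<K. Xop B (k,a) (Dop B (k,b) (Xop B (k',c) (Dop B (k',d) f))) x)"
      unfolding opE_def by (simp add: lin_sum[OF lin_Xop] lin_sum[OF lin_Dop])
    also have "\<dots> = (\<Sum>k<K. \<Sum>k'<K. T k k' + (if k = k' \<and> b = c then Xop B (k,a) (Dop B (k',d) f) x else 0))"
      unfolding T_def DX by (intro sum.cong refl) (auto simp: lin_add[OF lin_Xop] lin_zero[OF lin_Xop])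
    also have "\<dots> = (\<Sum>k<K. \<Sum>k'<K. T k k') + (\<Sum>k<K. \<Sum>k'<K. (if k = k' \<and> b = c then Xop B (k,a) (Dop B (k',d) f) x else 0))"
      by (simp add: sum.distrib)
    also have "(\<Sum>k<K. \<Sum>k'<K. (if k = k' \<and> b = c then Xop B (k,a) (Dop B (k',d) f) x else 0)) = (if b = c then opE K B a d f x else 0)"
      unfolding opE_def by (auto simp: sum.delta)
    finally show ?thesis .
  qed
  have R: "opE K B c d (opE K B a b f) x = (\<Sum>k'<K. \<Sum>k<K. T k k') + (if d = a then opE K B c b f x else 0)"
  proof -
    have "opE K B c d (opE K B a b f) x = (\<Sum>k'<K. \<Sum>k<K. Xop B (k',c) (Dop B (k',d) (Xop B (k,a) (Dop B (k,b) f))) x)"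
      unfolding opE_def by (simp add: lin_sum[OF lin_Xop] lin_sum[OF lin_Dop])
    also have "\<dots> = (\<Sum>k'<K. \<Sum>k<K. T k k' + (if k' = k \<and> d = a then Xop B (k',c) (Dop B (k,b) f) x else 0))"
      unfolding T_def DX by (intro sum.cong refl) (auto simp: lin_add[OF lin_Xop] lin_zero[OF lin_Xop] XX DD)
    also have "\<dots> = (\<Sum>k'<K. \<Sum>k<K. T k k') + (\<Sum>k'<K. \<Sum>k<K. (if k' = k \<and> d = a then Xop B (k',c) (Dop B (k,b) f) x else 0))"
      by (simp add: sum.distrib)
    also have "(\<Sum>k'<K. \<Sum>k<K. (if k' = k \<and> d = a then Xop B (k',c) (Dop B (k,b) f) x else 0)) = (if d = a then opE K B c b f x else 0)"
      unfolding opE_def by (auto simp: sum.delta)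
    finally show ?thesis .
  qed
  show "opE K B a b (opE K B c d f) x = opE K B c d (opE K B a b f) x
      + (if b = c then opE K B a d f x else 0) - (if d = a then opE K B c b f x else 0)"
    using L R sum.swap[of "\<lambda>k k'. T k k'" "{..<K}" "{..<K}"] by simp
qed


definition rho :: "nat \<Rightarrow> nat \<Rightarrow> (nat \<times> nat \<Rightarrow> bool) \<Rightarrow> mat \<Rightarrow> vec \<Rightarrow> vec" where
  "rho n K B X f = (\<lambda>x. \<Sum>a=1..n. \<Sum>b=1..n. X a b * opE K B a b f x)"

lemma lin_rho: "lin (rho n K B X)"
  unfolding lin_def rho_def
  by (simp add: lin_add[OF lin_opE] lin_smul[OF lin_opE] sum.distrib sum_distrib_left algebra_simps)

lemma rho_madd: "rho n K B (madd X Y) f = (\<lambda>x. rho n K B X f x + rho n K B Y f x)"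
  by (simp add: rho_def madd_def sum.distrib algebra_simps)
lemma rho_msmul: "rho n K B (msmul c X) f = (\<lambda>x. c * rho n K B X f x)"
  by (simp add: rho_def msmul_def sum_distrib_left algebra_simps)

lemma sum4_swap:
  fixes g :: "nat \<Rightarrow> nat \<Rightarrow> nat \<Rightarrow> nat \<Rightarrow> complex"
  shows "(\<Sum>a\<in>A. \<Sum>b\<in>A. \<Sum>c\<in>A. \<Sum>d\<in>A. g a b c d) = (\<Sum>c\<in>A. \<Sum>d\<in>A. \<Sum>a\<in>A. \<Sum>b\<in>A. g a b c d)"
proof -
  have "(\<Sum>a\<in>A. \<Sum>b\<in>A. \<Sum>c\<in>A. \<Sum>d\<in>A. g a b c d) = (\<Sum>a\<in>A. \<Sum>c\<in>A. \<Sum>b\<in>A. \<Sum>d\<in>A. g a b c d)"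
    by (rule sum.cong[OF refl], rule sum.swap)
  also have "\<dots> = (\<Sum>c\<in>A. \<Sum>a\<in>A. \<Sum>b\<in>A. \<Sum>d\<in>A. g a b c d)" by (rule sum.swap)
  also have "\<dots> = (\<Sum>c\<in>A. \<Sum>a\<in>A. \<Sum>d\<in>A. \<Sum>b\<in>A. g a b c d)"
    by (rule sum.cong[OF refl], rule sum.cong[OF refl], rule sum.swap)
  also have "\<dots> = (\<Sum>c\<in>A. \<Sum>d\<in>A. \<Sum>a\<in>A. \<Sum>b\<in>A. g a b c d)"
    by (rule sum.cong[OF refl], rule sum.swap)
  finally show ?thesis .
qed

lemma sum_delta_c:
  fixes g :: "nat \<Rightarrow> nat \<Rightarrow> complex"
  assumes "finite A" "b \<in> A"
  shows "(\<Sum>c\<in>A. \<Sum>d\<in>A. g c d * (if b = c then h d else 0)) = (\<Sum>d\<in>A. g b d * h d)"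
proof -
  have "(\<Sum>c\<in>A. \<Sum>d\<in>A. g c d * (if b = c then h d else 0)) = (\<Sum>c\<in>A. if c = b then (\<Sum>d\<in>A. g b d * h d) else 0)"
    by (rule sum.cong) auto
  also have "\<dots> = (\<Sum>d\<in>A. g b d * h d)" using assms by simp
  finally show ?thesis .
qed

lemma sum_delta_d:
  fixes g :: "nat \<Rightarrow> nat \<Rightarrow> complex"
  assumes "finite A" "a \<in> A"
  shows "(\<Sum>c\<in>A. \<Sum>d\<in>A. g c d * (if d = a then h c else 0)) = (\<Sum>c\<in>A. g c a * h c)"
proof -
  have "(\<Sum>d\<in>A. g c d * (if d = a then h c else 0)) = g c a * h c" for c
  proof -
    have "(\<Sum>d\<in>A. g c d * (if d = a then h c else 0)) = (\<Sum>d\<in>A. if d = a then g c a * h c else 0)"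
      by (rule sum.cong) auto
    also have "\<dots> = g c a * h c" using assms by simp
    finally show ?thesis .
  qed
  then show ?thesis by simp
qed

lemma rho_comm:
  "rho n K B X (rho n K B Y f) = (\<lambda>x. rho n K B Y (rho n K B X f) x + rho n K B (mbr n X Y) f x)"
proof
  fix x
  let ?A = "{1..n}"
  define Oo where "Oo a b c d = opE K B a b (opE K B c d f) x" for a b c d
  have 1: "rho n K B X (rho n K B Y f) x = (\<Sum>a\<in>?A. \<Sum>b\<in>?A. \<Sum>c\<in>?A. \<Sum>d\<in>?A. X a b * Y c d * Oo a b c d)"
    unfolding rho_def Oo_def
    by (simp only: lin_sum[OF lin_opE] lin_smul[OF lin_opE] sum_distrib_left mult.assoc)
  have 2: "rho n K B Y (rho n K B X f) x = (\<Sum>a\<in>?A. \<Sum>b\<in>?A. \<Sum>c\<in>?A. \<Sum>d\<in>?A. X a b * Y c d * Oo c d a b)"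
  proof -
    have "rho n K B Y (rho n K B X f) x = (\<Sum>c\<in>?A. \<Sum>d\<in>?A. \<Sum>a\<in>?A. \<Sum>b\<in>?A. Y c d * (X a b * Oo c d a b))"
      unfolding rho_def Oo_def
      by (simp only: lin_sum[OF lin_opE] lin_smul[OF lin_opE] sum_distrib_left)
    then have "rho n K B Y (rho n K B X f) x = (\<Sum>c\<in>?A. \<Sum>d\<in>?A. \<Sum>a\<in>?A. \<Sum>b\<in>?A. X a b * Y c d * Oo c d a b)"
      by (simp only: mult.assoc mult.left_commute)
    then show ?thesis by (simp only: sum4_swap[where g="\<lambda>a b c d. X a b * Y c d * Oo c d a b"])
  qed
  have S2: "(\<Sum>a\<in>?A. \<Sum>b\<in>?A. \<Sum>c\<in>?A. \<Sum>d\<in>?A. X a b * Y c d * (if b = c then opE K B a d f x else 0))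
      = (\<Sum>a\<in>?A. \<Sum>d\<in>?A. mmul n X Y a d * opE K B a d f x)"
  proof -
    have "(\<Sum>a\<in>?A. \<Sum>b\<in>?A. \<Sum>c\<in>?A. \<Sum>d\<in>?A. X a b * Y c d * (if b = c then opE K B a d f x else 0))
       = (\<Sum>a\<in>?A. \<Sum>b\<in>?A. \<Sum>d\<in>?A. X a b * Y b d * opE K B a d f x)"
      apply (rule sum.cong[OF refl], rule sum.cong[OF refl])
      apply (subst sum_delta_c[where g="\<lambda>c d. X _ _ * Y c d", simplified mult.assoc[symmetric]])
      by auto
    also have "\<dots> = (\<Sum>a\<in>?A. \<Sum>d\<in>?A. \<Sum>b\<in>?A. X a b * Y b d * opE K B a d f x)"
      by (rule sum.cong[OF refl], rule sum.swap)
    also have "\<dots> = (\<Sum>a\<in>?A. \<Sum>d\<in>?A. mmul n X Y a d * opE K B a d f x)"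
      by (simp add: mmul_def sum_distrib_right)
    finally show ?thesis .
  qed
  have S3: "(\<Sum>a\<in>?A. \<Sum>b\<in>?A. \<Sum>c\<in>?A. \<Sum>d\<in>?A. X a b * Y c d * (if d = a then opE K B c b f x else 0))
      = (\<Sum>c\<in>?A. \<Sum>b\<in>?A. mmul n Y X c b * opE K B c b f x)"
  proof -
    have "(\<Sum>a\<in>?A. \<Sum>b\<in>?A. \<Sum>c\<in>?A. \<Sum>d\<in>?A. X a b * Y c d * (if d = a then opE K B c b f x else 0))
       = (\<Sum>a\<in>?A. \<Sum>b\<in>?A. \<Sum>c\<in>?A. X a b * Y c a * opE K B c b f x)"
      apply (rule sum.cong[OF refl], rule sum.cong[OF refl])
      apply (subst sum_delta_d[where g="\<lambda>c d. X _ _ * Y c d", simplified mult.assoc[symmetric]])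
      by auto
    also have "\<dots> = (\<Sum>c\<in>?A. \<Sum>b\<in>?A. \<Sum>a\<in>?A. X a b * Y c a * opE K B c b f x)"
    proof -
      have "(\<Sum>a\<in>?A. \<Sum>b\<in>?A. \<Sum>c\<in>?A. X a b * Y c a * opE K B c b f x) = (\<Sum>b\<in>?A. \<Sum>a\<in>?A. \<Sum>c\<in>?A. X a b * Y c a * opE K B c b f x)"
        by (rule sum.swap)
      also have "\<dots> = (\<Sum>b\<in>?A. \<Sum>c\<in>?A. \<Sum>a\<in>?A. X a b * Y c a * opE K B c b f x)"
        by (rule sum.cong[OF refl], rule sum.swap)
      also have "\<dots> = (\<Sum>c\<in>?A. \<Sum>b\<in>?A. \<Sum>a\<in>?A. X a b * Y c a * opE K B c b f x)"
        by (rule sum.swap)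
      finally show ?thesis .
    qed
    also have "\<dots> = (\<Sum>c\<in>?A. \<Sum>b\<in>?A. mmul n Y X c b * opE K B c b f x)"
      unfolding mmul_def sum_distrib_right by (intro sum.cong refl) (simp add: mult_ac)
    finally show ?thesis .
  qed
  have eq: "Oo a b c d = Oo c d a b + (if b = c then opE K B a d f x else 0) - (if d = a then opE K B c b f x else 0)" for a b c d
    unfolding Oo_def by (subst opE_comm) simp
  have "rho n K B X (rho n K B Y f) x = (\<Sum>a\<in>?A. \<Sum>b\<in>?A. \<Sum>c\<in>?A. \<Sum>d\<in>?A.
        X a b * Y c d * Oo c d a b + X a b * Y c d * (if b = c then opE K B a d f x else 0)
        - X a b * Y c d * (if d = a then opE K B c b f x else 0))"
    unfolding 1 apply (intro sum.cong refl) apply (subst eq) by (simp add: algebra_simps)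
  also have "\<dots> = (\<Sum>a\<in>?A. \<Sum>b\<in>?A. \<Sum>c\<in>?A. \<Sum>d\<in>?A. X a b * Y c d * Oo c d a b)
     + (\<Sum>a\<in>?A. \<Sum>b\<in>?A. \<Sum>c\<in>?A. \<Sum>d\<in>?A. X a b * Y c d * (if b = c then opE K B a d f x else 0))
     - (\<Sum>a\<in>?A. \<Sum>b\<in>?A. \<Sum>c\<in>?A. \<Sum>d\<in>?A. X a b * Y c d * (if d = a then opE K B c b f x else 0))"
    by (simp only: sum.distrib sum_subtractf)
  also have "\<dots> = rho n K B Y (rho n K B X f) x + rho n K B (mbr n X Y) f x"
    unfolding 2 S2 S3 by (simp add: rho_def mbr_def sum_subtractf ring_distribs)
  finally show "rho n K B X (rho n K B Y f) x = rho n K B Y (rho n K B X f) x + rho n K B (mbr n X Y) f x" .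
qed


fun rW :: "nat \<Rightarrow> nat \<Rightarrow> (nat \<times> nat \<Rightarrow> bool) \<Rightarrow> mat list \<Rightarrow> vec \<Rightarrow> vec" where
  "rW n K B [] f = f"
| "rW n K B (X # w) f = rho n K B X (rW n K B w f)"

lemma lin_rW: "lin (rW n K B w)"
proof (induction w)
  case Nil
  have "rW n K B [] = (\<lambda>f. f)" by (rule ext) simp
  then show ?case by (simp add: lin_id)
next
  case (Cons X w)
  have "rW n K B (X # w) = (\<lambda>f. rho n K B X (rW n K B w f))" by (rule ext) simp
  then show ?case using lin_comp[OF lin_rho Cons.IH] by simp
qed

lemma rW_append: "rW n K B (u @ v) f = rW n K B u (rW n K B v f)"
  by (induction u) auto

definition rF :: "nat \<Rightarrow> nat \<Rightarrow> (nat \<times> nat \<Rightarrow> bool) \<Rightarrow> fa \<Rightarrow> vec \<Rightarrow> vec" where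
  "rF n K B a f = (\<lambda>x. \<Sum>w\<in>{w. a w \<noteq> 0}. a w * rW n K B w f x)"

lemma lin_rF: "lin (rF n K B a)"
  unfolding lin_def rF_def
  by (simp add: lin_add[OF lin_rW] lin_smul[OF lin_rW] sum.distrib sum_distrib_left algebra_simps)

lemma rF_superset:
  assumes "finite S" "{w. a w \<noteq> 0} \<subseteq> S"
  shows "rF n K B a f = (\<lambda>x. \<Sum>w\<in>S. a w * rW n K B w f x)"
  unfolding rF_def using assms by (intro ext sum.mono_neutral_left) auto

lemma rF_lin:
  assumes "fin a" "fin b"
  shows "rF n K B (\<lambda>w. c * a w + d * b w) f = (\<lambda>x. c * rF n K B a f x + d * rF n K B b f x)"
proof -
  let ?S = "{w. a w \<noteq> 0} \<union> {w. b w \<noteq> 0}"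
  have fS: "finite ?S" using assms by (simp add: fin_def)
  have "rF n K B (\<lambda>w. c * a w + d * b w) f = (\<lambda>x. \<Sum>w\<in>?S. (c * a w + d * b w) * rW n K B w f x)"
    by (rule rF_superset[OF fS]) auto
  moreover have "rF n K B a f = (\<lambda>x. \<Sum>w\<in>?S. a w * rW n K B w f x)" by (rule rF_superset[OF fS]) auto
  moreover have "rF n K B b f = (\<lambda>x. \<Sum>w\<in>?S. b w * rW n K B w f x)" by (rule rF_superset[OF fS]) auto
  ultimately show ?thesis by (simp add: sum.distrib sum_distrib_left algebra_simps)
qed

lemma rF_add: "fin a \<Longrightarrow> fin b \<Longrightarrow> rF n K B (\<lambda>w. a w + b w) f = (\<lambda>x. rF n K B a f x + rF n K B b f x)"
  using rF_lin[of a b n K B 1 1 f] by simp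
lemma rF_diff: "fin a \<Longrightarrow> fin b \<Longrightarrow> rF n K B (\<lambda>w. a w - b w) f = (\<lambda>x. rF n K B a f x - rF n K B b f x)"
  using rF_lin[of a b n K B 1 "-1" f] by simp
lemma rF_smul: "fin a \<Longrightarrow> rF n K B (\<lambda>w. c * a w) f = (\<lambda>x. c * rF n K B a f x)"
  using rF_lin[of a a n K B c 0 f] by simp
lemma rF_zero: "rF n K B (\<lambda>w. 0) f = (\<lambda>x. 0)" by (simp add: rF_def)
lemma rF_dl: "rF n K B (dl u) f = rW n K B u f"
  by (rule ext) (simp add: rF_def dl_def)

lemma fin_decomp: "fin a \<Longrightarrow> a = (\<lambda>w. \<Sum>u\<in>{w. a w \<noteq> 0}. a u * dl u w)"
proof
  fix w assume "fin a"
  have "(\<Sum>u\<in>{w. a w \<noteq> 0}. a u * dl u w) = (\<Sum>u\<in>{w. a w \<noteq> 0}. if u = w then a w else 0)"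
    by (rule sum.cong) (auto simp: dl_def)
  also have "\<dots> = a w" using \<open>fin a\<close> by (simp add: fin_def)
  finally show "a w = (\<Sum>u\<in>{w. a w \<noteq> 0}. a u * dl u w)" by simp
qed

lemma fa_mul_sum_left: "fa_mul (\<lambda>w. \<Sum>i\<in>I. c i * f i w) g = (\<lambda>w. \<Sum>i\<in>I. c i * fa_mul (f i) g w)"
  by (simp add: fa_mul_def sum_distrib_right sum_distrib_left algebra_simps sum.swap[of _ I])
lemma fa_mul_sum_right: "fa_mul g (\<lambda>w. \<Sum>i\<in>I. c i * f i w) = (\<lambda>w. \<Sum>i\<in>I. c i * fa_mul g (f i) w)"
  by (simp add: fa_mul_def sum_distrib_right sum_distrib_left algebra_simps sum.swap[of _ I])

lemma fa_mul_expand: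
  assumes "fin a" "fin b"
  shows "fa_mul a b = (\<lambda>w. \<Sum>u\<in>{w. a w \<noteq> 0}. \<Sum>v\<in>{w. b w \<noteq> 0}. a u * b v * dl (u @ v) w)"
proof -
  have "fa_mul a b = fa_mul (\<lambda>w. \<Sum>u\<in>{w. a w \<noteq> 0}. a u * dl u w) (\<lambda>w. \<Sum>v\<in>{w. b w \<noteq> 0}. b v * dl v w)"
    using fin_decomp[OF assms(1)] fin_decomp[OF assms(2)] by simp
  also have "\<dots> = (\<lambda>w. \<Sum>u\<in>{w. a w \<noteq> 0}. \<Sum>v\<in>{w. b w \<noteq> 0}. a u * b v * dl (u @ v) w)"
    by (simp add: fa_mul_sum_left fa_mul_sum_right fa_mul_dl sum_distrib_left algebra_simps)
  finally show ?thesis .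
qed

lemma rF_mul:
  assumes "fin a" "fin b"
  shows "rF n K B (fa_mul a b) f = rF n K B a (rF n K B b f)"
proof
  fix x
  let ?Sa = "{w. a w \<noteq> 0}" and ?Sb = "{w. b w \<noteq> 0}"
  let ?S = "(\<lambda>(u,v). u @ v) ` (?Sa \<times> ?Sb)"
  have fa: "finite ?Sa" and fb: "finite ?Sb" using assms by (auto simp: fin_def)
  have fS: "finite ?S" using fa fb by simp
  have "rF n K B (fa_mul a b) f x = (\<Sum>w\<in>?S. fa_mul a b w * rW n K B w f x)"
    using rF_superset[OF fS fa_mul_supp[of a b]] by simp
  also have "\<dots> = (\<Sum>w\<in>?S. \<Sum>u\<in>?Sa. \<Sum>v\<in>?Sb. a u * b v * (dl (u @ v) w * rW n K B w f x))"
    by (subst fa_mul_expand[OF assms]) (simp add: sum_distrib_left sum_distrib_right mult_ac)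
  also have "\<dots> = (\<Sum>u\<in>?Sa. \<Sum>v\<in>?Sb. a u * b v * (\<Sum>w\<in>?S. dl (u @ v) w * rW n K B w f x))"
    by (simp add: sum_distrib_left sum.swap[of _ ?S])
  also have "\<dots> = (\<Sum>u\<in>?Sa. \<Sum>v\<in>?Sb. a u * b v * rW n K B (u @ v) f x)"
  proof (intro sum.cong refl)
    fix u v assume "u \<in> ?Sa" "v \<in> ?Sb"
    then have "u @ v \<in> ?S" by auto
    then have "(\<Sum>w\<in>?S. dl (u @ v) w * rW n K B w f x) = rW n K B (u @ v) f x"
    proof -
      have "(\<Sum>w\<in>?S. dl (u @ v) w * rW n K B w f x) = (\<Sum>w\<in>?S. if w = u @ v then rW n K B (u @ v) f x else 0)"
        by (rule sum.cong) (auto simp: dl_def)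
      also have "\<dots> = rW n K B (u @ v) f x" using fS \<open>u @ v \<in> ?S\<close> by simp
      finally show ?thesis .
    qed
    then show "a u * b v * (\<Sum>w\<in>?S. dl (u @ v) w * rW n K B w f x) = a u * b v * rW n K B (u @ v) f x" by simp
  qed
  also have "\<dots> = rF n K B a (rF n K B b f) x"
    unfolding rF_def rW_append
    by (simp add: lin_sum[OF lin_rW] lin_smul[OF lin_rW] sum_distrib_left algebra_simps)
  finally show "rF n K B (fa_mul a b) f x = rF n K B a (rF n K B b f) x" .
qed

lemma ltr_fun: "(\<lambda>w. ltr X w) = dl [X]" by (simp add: ltr_dl)

lemma Iid_rF: "a \<in> Iid n \<Longrightarrow> rF n K B a f = (\<lambda>x. 0)"
proof (induction arbitrary: f rule: Iid.induct)
  case (lin_add X Y)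
  show ?case
    by (simp add: ltr_dl rF_diff fin_diff fin_dl rF_dl rho_madd)
next
  case (lin_smul X c)
  show ?case
    by (simp add: ltr_dl rF_diff rF_smul fin_smul fin_dl rF_dl rho_msmul)
next
  case (comm X Y)
  have "rF n K B (fa_mul (ltr X) (ltr Y)) f = rho n K B X (rho n K B Y f)"
    by (simp add: ltr_dl fa_mul_dl rF_dl)
  moreover have "rF n K B (fa_mul (ltr Y) (ltr X)) f = rho n K B Y (rho n K B X f)"
    by (simp add: ltr_dl fa_mul_dl rF_dl)
  ultimately show ?case
    by (simp add: ltr_dl fa_mul_dl rF_diff fin_diff fin_dl rF_dl rho_comm[of n K B X Y f])
next
  case zero then show ?case by (simp add: rF_zero)
next
  case (add a b) then show ?case by (simp add: fa_add_def rF_add Iid_fin)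
next
  case (smul a c) then show ?case by (simp add: fa_smul_def rF_smul Iid_fin)
next
  case (lmul a g) then show ?case by (simp add: rF_mul Iid_fin FA_fin lin_zero[OF lin_rF])
next
  case (rmul a g) then show ?case by (simp add: rF_mul Iid_fin FA_fin)
qed


definition dv :: "st \<Rightarrow> vec" where "dv g = (\<lambda>x. if x = g then 1 else 0)"

lemma upd_eq_iff: fixes x g :: st and c :: complex
  shows "(x(e := x e + c) = g) \<longleftrightarrow> (x = g(e := g e - c))"
proof
  assume "x(e := x e + c) = g"
  then have g: "g = x(e := x e + c)" by simp
  show "x = g(e := g e - c)" unfolding g by simp
next
  assume "x = g(e := g e - c)"
  then show "x(e := x e + c) = g" by simp
qed

lemma upd_eq_iff': fixes x g :: st and c :: complex shows "(x(e := x e - c) = g) \<longleftrightarrow> (x = g(e := g e + c))"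
  using upd_eq_iff[of x e "-c" g] by simp

lemma Dop_dv: "Dop B e (dv g) = (if B e then (\<lambda>x. - dv (g(e := g e + 1)) x) else (\<lambda>x. g e * dv (g(e := g e - 1)) x))"
proof (cases "B e")
  case True
  then show ?thesis by (intro ext) (simp add: Dop_def dv_def upd_eq_iff')
next
  case False
  then show ?thesis by (intro ext) (simp add: Dop_def dv_def upd_eq_iff)
qed

lemma Xop_dv: "Xop B e (dv g) = (if B e then (\<lambda>x. g e * dv (g(e := g e - 1)) x) else dv (g(e := g e + 1)))"
proof (cases "B e")
  case True
  then show ?thesis by (intro ext) (simp add: Xop_def dv_def upd_eq_iff)
next
  case False
  then show ?thesis by (intro ext) (simp add: Xop_def dv_def upd_eq_iff')
qed


lemma Dop_dv': "Dop B e (dv g) = (\<lambda>x. (if B e then -1 else g e) * dv (g(e := g e + (if B e then 1 else -1))) x)"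
  by (simp add: Dop_dv)
lemma Xop_dv': "Xop B e (dv g) = (\<lambda>x. (if B e then g e else 1) * dv (g(e := g e + (if B e then -1 else 1))) x)"
  by (simp add: Xop_dv)

definition Bm :: "(nat \<Rightarrow> nat) \<Rightarrow> nat \<times> nat \<Rightarrow> bool" where "Bm m = (\<lambda>e. snd e \<le> m (fst e))"
definition bet :: "(nat \<Rightarrow> nat) \<Rightarrow> (nat \<Rightarrow> complex) \<Rightarrow> st" where
  "bet m s = (\<lambda>e. if snd e = m (fst e) + 1 then s (fst e) else 0)"
definition lam :: "(nat \<Rightarrow> nat) \<Rightarrow> (nat \<Rightarrow> complex) \<Rightarrow> nat \<times> nat \<Rightarrow> complex" where
  "lam m s e = (if snd e \<le> m (fst e) then -1 else if snd e = m (fst e) + 1 then s (fst e) else 0)"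

lemma XD_dv: "Xop B e (Dop B e' (dv g)) = (\<lambda>x. (if B e' then -1 else g e') *
   ((if B e then (g(e' := g e' + (if B e' then 1 else -1))) e else 1) *
     dv ((g(e' := g e' + (if B e' then 1 else -1)))(e := (g(e' := g e' + (if B e' then 1 else -1))) e + (if B e then -1 else 1))) x))"
  by (simp add: Dop_dv' lin_smul[OF lin_Xop] Xop_dv')

lemma hw: "a < b \<Longrightarrow> Xop (Bm m) (k,a) (Dop (Bm m) (k,b) (dv (bet m s))) = (\<lambda>x. 0)"
  unfolding XD_dv by (rule ext) (auto simp: Bm_def bet_def)

lemma diag_gen: "Xop B e (Dop B e (dv g)) = (\<lambda>x. (if B e then -(g e + 1) else g e) * dv g x)"
  unfolding XD_dv by (rule ext) (auto simp: algebra_simps)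

lemma diag_pi_gen: "Xop B e (Dop B e f) g = (if B e then -(g e + 1) else g e) * f g"
  by (auto simp: Xop_def Dop_def algebra_simps)

lemma lam_bet: "(if Bm m e then -(bet m s e + 1) else bet m s e) = lam m s e"
  by (auto simp: Bm_def bet_def lam_def)

lemma diag_v: "Xop (Bm m) e (Dop (Bm m) e (dv (bet m s))) = (\<lambda>x. lam m s e * dv (bet m s) x)"
  by (simp add: diag_gen lam_bet)

lemma diag_pi: "Xop (Bm m) e (Dop (Bm m) e f) (bet m s) = lam m s e * f (bet m s)"
  by (simp add: diag_pi_gen lam_bet)

lemma off_pi: assumes "e \<noteq> e'" shows "Xop B e (Dop B e' (dv g)) g = 0"
proof -
  define c1 :: complex where "c1 = (if B e' then 1 else -1)"
  define c2 :: complex where "c2 = (if B e then -1 else 1)"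
  have "c1 \<noteq> 0" by (simp add: c1_def)
  then have "((g(e' := g e' + c1))(e := (g(e' := g e' + c1)) e + c2)) e' \<noteq> g e'" using assms by simp
  then have "(g(e' := g e' + c1))(e := (g(e' := g e' + c1)) e + c2) \<noteq> g" by metis
  then show ?thesis unfolding XD_dv c1_def[symmetric] c2_def[symmetric] by (simp add: dv_def)
qed


definition Lam :: "nat \<Rightarrow> (nat \<Rightarrow> nat) \<Rightarrow> (nat \<Rightarrow> complex) \<Rightarrow> nat \<Rightarrow> complex" where
  "Lam K m s a = (\<Sum>k<K. lam m s (k,a))"
definition ev :: "nat \<Rightarrow> nat \<Rightarrow> (nat \<Rightarrow> nat) \<Rightarrow> (nat \<Rightarrow> complex) \<Rightarrow> mat \<Rightarrow> complex" where
  "ev n K m s X = (\<Sum>a=1..n. X a a * Lam K m s a)"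
definition lowm :: "mat \<Rightarrow> mat" where "lowm X = (\<lambda>a b. if b < a then X a b else 0)"
definition upm :: "mat \<Rightarrow> mat" where "upm X = (\<lambda>a b. if a < b then X a b else 0)"
definition diagm :: "mat \<Rightarrow> mat" where "diagm X = (\<lambda>a b. if a = b then X a b else 0)"

lemma mat_split: "X = madd (madd (lowm X) (diagm X)) (upm X)"
  by (auto simp: fun_eq_iff madd_def lowm_def upm_def diagm_def)

context
  fixes n K :: nat and m :: "nat \<Rightarrow> nat" and s :: "nat \<Rightarrow> complex"
begin

abbreviation "vv \<equiv> dv (bet m s)"
abbreviation "BB \<equiv> Bm m"

lemma opE_up_v: "a < b \<Longrightarrow> opE K BB a b vv = (\<lambda>x. 0)"
  by (simp add: opE_def hw)

lemma opE_diag_v: "opE K BB a a vv = (\<lambda>x. Lam K m s a * vv x)"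
  by (simp add: opE_def diag_v Lam_def sum_distrib_right)

lemma rho_up_v: assumes "\<And>a b. X a b \<noteq> 0 \<Longrightarrow> a < b" shows "rho n K BB X vv = (\<lambda>x. 0)"
proof -
  have "X a b * opE K BB a b vv x = 0" for a b x
    by (cases "X a b = 0") (auto simp: opE_up_v assms)
  then show ?thesis unfolding rho_def by (intro ext) (simp del: mult_eq_0_iff)
qed

lemma rho_diag_v: assumes "\<And>a b. a \<noteq> b \<Longrightarrow> X a b = 0" shows "rho n K BB X vv = (\<lambda>x. ev n K m s X * vv x)"
proof
  fix x
  have "rho n K BB X vv x = (\<Sum>a=1..n. \<Sum>b=1..n. if b = a then X a a * opE K BB a a vv x else 0)"
    unfolding rho_def by (intro sum.cong refl) (auto simp: assms)
  also have "\<dots> = (\<Sum>a=1..n. X a a * Lam K m s a * vv x)" by (simp add: opE_diag_v mult.assoc)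
  finally show "rho n K BB X vv x = ev n K m s X * vv x" by (simp add: ev_def sum_distrib_right)
qed

lemma pi_rho_diag: assumes "\<And>a b. a \<noteq> b \<Longrightarrow> X a b = 0" shows "rho n K BB X f (bet m s) = ev n K m s X * f (bet m s)"
proof -
  have "rho n K BB X f (bet m s) = (\<Sum>a=1..n. \<Sum>b=1..n. if b = a then X a a * opE K BB a a f (bet m s) else 0)"
    unfolding rho_def by (intro sum.cong refl) (auto simp: assms)
  also have "\<dots> = (\<Sum>a=1..n. X a a * Lam K m s a * f (bet m s))"
    by (simp add: opE_def diag_pi Lam_def sum_distrib_right sum_distrib_left mult.assoc)
  finally show ?thesis by (simp add: ev_def sum_distrib_right)
qed

lemma pi_rho_v: "rho n K BB X vv (bet m s) = ev n K m s X"
proof -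
  have "rho n K BB X vv (bet m s) = (\<Sum>a=1..n. \<Sum>b=1..n. if b = a then X a a * Lam K m s a else 0)"
    unfolding rho_def
  proof (intro sum.cong refl)
    fix a b
    show "X a b * opE K BB a b vv (bet m s) = (if b = a then X a a * Lam K m s a else 0)"
    proof (cases "b = a")
      case True then show ?thesis using opE_diag_v[of a] by (simp add: dv_def)
    next
      case False then show ?thesis by (simp add: opE_def off_pi)
    qed
  qed
  also have "\<dots> = ev n K m s X" by (simp add: ev_def)
  finally show ?thesis .
qed

definition H0 :: mat where "H0 = (\<lambda>i j. if i = j then of_nat i else 0)"

lemma rho_Eu: "a \<in> {1..n} \<Longrightarrow> b \<in> {1..n} \<Longrightarrow> rho n K B (Eu a b) f = opE K B a b f"
proof
  fix x assume ab: "a \<in> {1..n}" "b \<in> {1..n}"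
  have "rho n K B (Eu a b) f x = (\<Sum>a'=1..n. if a' = a then (\<Sum>b'=1..n. if b' = b then opE K B a b f x else 0) else 0)"
    unfolding rho_def Eu_def by (intro sum.cong refl) (auto simp: if_distrib[where f="\<lambda>z. z * _"] cong: if_cong)
  also have "\<dots> = opE K B a b f x" using ab by simp
  finally show "rho n K B (Eu a b) f x = opE K B a b f x" .
qed

lemma mbr_H0: assumes "a \<in> {1..n}" "b \<in> {1..n}"
  shows "mbr n H0 (Eu a b) = msmul (of_nat a - of_nat b) (Eu a b)"
proof (intro ext)
  fix i j
  have 1: "mmul n H0 (Eu a b) i j = (if i = a \<and> j = b then of_nat a else 0)"
  proof -
    have "mmul n H0 (Eu a b) i j = (\<Sum>k=1..n. if k = a then (if i = a \<and> j = b then of_nat a else 0) else 0)"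
      unfolding mmul_def H0_def Eu_def by (intro sum.cong refl) auto
    then show ?thesis using assms by simp
  qed
  have 2: "mmul n (Eu a b) H0 i j = (if i = a \<and> j = b then of_nat b else 0)"
  proof -
    have "mmul n (Eu a b) H0 i j = (\<Sum>k=1..n. if k = b then (if i = a \<and> j = b then of_nat b else 0) else 0)"
      unfolding mmul_def H0_def Eu_def by (intro sum.cong refl) auto
    then show ?thesis using assms by simp
  qed
  show "mbr n H0 (Eu a b) i j = msmul (of_nat a - of_nat b) (Eu a b) i j"
    unfolding mbr_def 1 2 by (auto simp: msmul_def Eu_def)
qed

lemma H0_opE: assumes "a \<in> {1..n}" "b \<in> {1..n}"
  shows "rho n K B H0 (opE K B a b f) = (\<lambda>x. opE K B a b (rho n K B H0 f) x + (of_nat a - of_nat b) * opE K B a b f x)"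
  using rho_comm[of n K B H0 "Eu a b" f] assms by (simp add: rho_Eu mbr_H0 rho_msmul)

lemma weight0: assumes "a \<in> {1..n}" "b \<in> {1..n}" "c \<in> {1..n}" "d \<in> {1..n}" "b < a" "d < c"
  shows "opE K BB a b (opE K BB c d vv) (bet m s) = 0"
proof -
  let ?y = "opE K BB a b (opE K BB c d vv)"
  have H0d: "\<And>i j. i \<noteq> j \<Longrightarrow> H0 i j = 0" by (simp add: H0_def)
  have 1: "rho n K BB H0 vv = (\<lambda>x. ev n K m s H0 * vv x)" by (rule rho_diag_v[OF H0d])
  have 2: "rho n K BB H0 (opE K BB c d vv) = (\<lambda>x. (ev n K m s H0 + (of_nat c - of_nat d)) * opE K BB c d vv x)"
    using assms by (simp add: H0_opE 1 lin_smul[OF lin_opE]) (simp add: algebra_simps)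
  have 3: "rho n K BB H0 ?y = (\<lambda>x. (ev n K m s H0 + (of_nat c - of_nat d) + (of_nat a - of_nat b)) * ?y x)"
    using assms by (simp add: H0_opE 2 lin_smul[OF lin_opE]) (simp add: algebra_simps)
  have "rho n K BB H0 ?y (bet m s) = ev n K m s H0 * ?y (bet m s)" by (rule pi_rho_diag[OF H0d])
  then have "((of_nat c - of_nat d) + (of_nat a - of_nat b)) * ?y (bet m s) = (0::complex)"
    unfolding 3 by (simp add: algebra_simps)
  moreover have "((of_nat c - of_nat d) + (of_nat a - of_nat b)) \<noteq> (0::complex)"
  proof -
    have "real c - real d + (real a - real b) > 0" using assms by simp
    then have "complex_of_real (real c - real d + (real a - real b)) \<noteq> 0" by (metis of_real_eq_0_iff less_irrefl)
    then show ?thesis by simp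
  qed
  ultimately show ?thesis by simp
qed

lemma pi_low_low: assumes "\<And>a b. N a b \<noteq> 0 \<Longrightarrow> b < a" "\<And>a b. N' a b \<noteq> 0 \<Longrightarrow> b < a"
  shows "rho n K BB N (rho n K BB N' vv) (bet m s) = 0"
proof -
  have "rho n K BB N (rho n K BB N' vv) (bet m s) = (\<Sum>a=1..n. \<Sum>b=1..n. \<Sum>c=1..n. \<Sum>d=1..n.
      N a b * (N' c d * opE K BB a b (opE K BB c d vv) (bet m s)))"
    unfolding rho_def by (simp add: lin_sum[OF lin_opE] lin_smul[OF lin_opE] sum_distrib_left)
  also have "\<dots> = 0"
  proof (intro sum.neutral ballI)
    fix a b c d assume "a \<in> {1..n}" "b \<in> {1..n}" "c \<in> {1..n}" "d \<in> {1..n}"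
    then show "N a b * (N' c d * opE K BB a b (opE K BB c d vv) (bet m s)) = 0"
      using assms weight0 by (cases "N a b = 0"; cases "N' c d = 0") auto
  qed
  finally show ?thesis .
qed

lemma pi_rho_rho_v: "rho n K BB X (rho n K BB Y vv) (bet m s) = ev n K m s (mbr n X (lowm Y)) + ev n K m s X * ev n K m s Y"
proof -
  have low: "\<And>a b. lowm Z a b \<noteq> 0 \<Longrightarrow> b < a" for Z by (auto simp: lowm_def split: if_splits)
  have up: "\<And>a b. upm Z a b \<noteq> 0 \<Longrightarrow> a < b" for Z by (auto simp: upm_def split: if_splits)
  have dg: "\<And>a b. a \<noteq> b \<Longrightarrow> diagm Z a b = 0" for Z by (auto simp: diagm_def)
  have evd: "ev n K m s (diagm Z) = ev n K m s Z" for Z by (simp add: ev_def diagm_def)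
  have evl: "ev n K m s (lowm Z) = 0" for Z by (simp add: ev_def lowm_def)
  have rv: "rho n K BB Z vv = (\<lambda>x. rho n K BB (lowm Z) vv x + ev n K m s Z * vv x)" for Z
    by (subst mat_split[of Z]) (simp add: rho_madd rho_up_v[OF up] rho_diag_v[OF dg] evd)
  have "rho n K BB X (rho n K BB Y vv) = (\<lambda>x. rho n K BB X (rho n K BB (lowm Y) vv) x + ev n K m s Y * rho n K BB X vv x)"
    by (simp add: rv[of Y] lin_add[OF lin_rho] lin_smul[OF lin_rho])
  moreover have "rho n K BB X (rho n K BB (lowm Y) vv) = (\<lambda>x. rho n K BB (lowm Y) (rho n K BB X vv) x + rho n K BB (mbr n X (lowm Y)) vv x)"
    by (rule rho_comm)
  moreover have "rho n K BB (lowm Y) (rho n K BB X vv) (bet m s) = 0"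
    by (simp add: rv[of X] lin_add[OF lin_rho] lin_smul[OF lin_rho] pi_low_low[OF low low] pi_rho_v evl)
  ultimately show ?thesis by (simp add: pi_rho_v)
qed

end


definition mu :: "nat \<Rightarrow> (nat \<Rightarrow> nat) \<Rightarrow> (nat \<Rightarrow> complex) \<Rightarrow> nat \<Rightarrow> complex" where
  "mu K m s i = Lam K m s i - Lam K m s (i + 1)"

lemma abel: fixes l :: nat shows "(\<Sum>k=1..l. (\<Sum>j=1..k. X j j) * (L k - L (k+1))) =
    (\<Sum>j=1..l. X j j * L j) - (\<Sum>j=1..l. X j j) * (L (l+1) :: complex)"
  by (induction l) (simp_all add: algebra_simps)

lemma ev_hval:
  assumes "(\<Sum>a=1..Suc l. X a a) = 0"
  shows "ev (Suc l) K m s X = hval l (mu K m s) X"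
proof -
  have "hval l (mu K m s) X = (\<Sum>j=1..l. X j j * Lam K m s j) - (\<Sum>j=1..l. X j j) * Lam K m s (l+1)"
    unfolding hval_def mu_def by (rule abel)
  moreover have "(\<Sum>j=1..l. X j j) = - X (l+1) (l+1)" using assms by (simp add: add_eq_0_iff)
  ultimately show ?thesis by (simp add: ev_def)
qed

lemma tr_g: "X \<in> g_set n \<Longrightarrow> (\<Sum>a=1..n. X a a) = 0" by (simp add: g_set_def)

lemma tr_mbr: "(\<Sum>a=1..n. mbr n X Y a a) = 0"
proof -
  have "(\<Sum>a=1..n. \<Sum>k=1..n. Y a k * X k a) = (\<Sum>k=1..n. \<Sum>a=1..n. Y a k * X k a)" by (rule sum.swap)
  then show ?thesis unfolding mbr_def mmul_def by (simp add: sum_subtractf mult.commute)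
qed

lemma mbr_g: "X \<in> g_set n \<Longrightarrow> Y \<in> g_set n \<Longrightarrow> mbr n X Y \<in> g_set n"
proof -
  assume X: "X \<in> g_set n" and Y: "Y \<in> g_set n"
  have "mbr n X Y a b \<noteq> 0 \<Longrightarrow> a \<in> {1..n} \<and> b \<in> {1..n}" for a b
  proof (rule ccontr)
    assume "mbr n X Y a b \<noteq> 0" "\<not> (a \<in> {1..n} \<and> b \<in> {1..n})"
    then have "X a k = 0 \<or> Y k b = 0" "Y a k = 0 \<or> X k b = 0" for k using X Y unfolding g_set_def by blast+
    then have "mbr n X Y a b = 0" unfolding mbr_def mmul_def by (simp add: sum.neutral)
    then show False using \<open>mbr n X Y a b \<noteq> 0\<close> by simp
  qed
  then show ?thesis using tr_mbr[of n X Y] by (simp add: g_set_def)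
qed

fun gw :: "nat \<Rightarrow> (nat \<Rightarrow> complex) \<Rightarrow> mat list \<Rightarrow> complex" where
  "gw l x [] = 1"
| "gw l x [X] = hval l x X"
| "gw l x [X, Y] = hval l x (mbr (l+1) X (lowm Y)) + hval l x X * hval l x Y"
| "gw l x w = 0"

lemma pi_rW:
  assumes "length w \<le> 2" "set w \<subseteq> g_set (Suc l)"
  shows "rW (Suc l) K (Bm m) w (dv (bet m s)) (bet m s) = gw l (mu K m s) w"
proof -
  consider "w = []" | X where "w = [X]" | X Y where "w = [X, Y]"
    using assms(1) by (cases w rule: remdups_adj.cases) auto
  then show ?thesis
  proof cases
    case 1 then show ?thesis by (simp add: dv_def)
  next
    case 2
    then have X: "X \<in> g_set (Suc l)" using assms(2) by simp
    show ?thesis using 2 ev_hval[where X=X and l=l, OF tr_g[OF X]] by (simp add: pi_rho_v)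
  next
    case 3
    then have X: "X \<in> g_set (Suc l)" and Y: "Y \<in> g_set (Suc l)" using assms(2) by auto
    show ?thesis using 3 ev_hval[where X=X and l=l, OF tr_g[OF X]] ev_hval[where X=Y and l=l, OF tr_g[OF Y]] ev_hval[where X="mbr (Suc l) X (lowm Y)" and l=l, OF tr_mbr]
      by (simp add: pi_rho_rho_v)
  qed
qed

definition U2 :: "nat \<Rightarrow> fa \<Rightarrow> bool" where
  "U2 n u \<longleftrightarrow> fin u \<and> (\<forall>w. u w \<noteq> 0 \<longrightarrow> length w \<le> 2 \<and> set w \<subseteq> g_set n)"

lemma pi_rF_U2:
  assumes "U2 (Suc l) u"
  shows "rF (Suc l) K (Bm m) u (dv (bet m s)) (bet m s) = (\<Sum>w\<in>{w. u w \<noteq> 0}. u w * gw l (mu K m s) w)"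
  unfolding rF_def using assms by (intro sum.cong refl) (auto simp: U2_def pi_rW)

lemma np_up: "E \<in> np_set n \<Longrightarrow> E a b \<noteq> 0 \<Longrightarrow> a < b" by (simp add: np_set_def)

lemma Jn_rF: "j \<in> Jn n \<Longrightarrow> rF n K (Bm m) j (dv (bet m s)) = (\<lambda>x. 0)"
proof (induction rule: Jn.induct)
  case (ideal a) then show ?case by (rule Iid_rF)
next
  case (gen f E)
  have "rF n K (Bm m) (fa_mul f (ltr E)) (dv (bet m s)) = rF n K (Bm m) f (rho n K (Bm m) E (dv (bet m s)))"
    using gen(1) by (simp add: rF_mul FA_fin fin_dl ltr_dl rF_dl)
  moreover have "rho n K (Bm m) E (dv (bet m s)) = (\<lambda>x. 0)" by (rule rho_up_v) (rule np_up[OF gen(2)])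
  ultimately show ?case by (simp add: rF_mul FA_fin fin_ltr ltr_dl rF_dl rho_up_v np_up lin_zero[OF lin_rF])
next
  case zero then show ?case by (simp add: rF_zero)
next
  case (add a b) then show ?case by (simp add: fa_add_def rF_add Jn_fin)
next
  case (smul a c) then show ?case by (simp add: fa_smul_def rF_smul Jn_fin)
qed

lemma h_diag: "H \<in> h_set n \<Longrightarrow> a \<noteq> b \<Longrightarrow> H a b = 0" by (simp add: h_set_def)
lemma h_g: "H \<in> h_set n \<Longrightarrow> H \<in> g_set n" by (simp add: h_set_def)

lemma rW_h:
  assumes "set w \<subseteq> h_set (l+1)"
  shows "rW (Suc l) K (Bm m) w (dv (bet m s)) = (\<lambda>x. prod_list (map (hval l (mu K m s)) w) * dv (bet m s) x)"
  using assms
proof (induction w)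
  case Nil then show ?case by simp
next
  case (Cons H w)
  then have H: "H \<in> h_set (Suc l)" by simp
  have "ev (Suc l) K m s H = hval l (mu K m s) H" by (rule ev_hval[where X=H and l=l, OF tr_g[OF h_g[OF H]]])
  moreover have "rW (Suc l) K (Bm m) w (dv (bet m s)) = (\<lambda>x. prod_list (map (hval l (mu K m s)) w) * dv (bet m s) x)"
    using Cons by simp
  ultimately show ?case
    by (simp add: lin_smul[OF lin_rho] rho_diag_v[OF h_diag[OF H]]) (simp add: algebra_simps)
qed

lemma Sh_rF:
  assumes "p \<in> Sh (Suc l)"
  shows "rF (Suc l) K (Bm m) p (dv (bet m s)) = (\<lambda>x. evalS l (mu K m s) p * dv (bet m s) x)"
  unfolding rF_def evalS_def sum_distrib_right
proof (intro ext sum.cong refl)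
  fix x w assume "w \<in> {w. p w \<noteq> 0}"
  then have "set w \<subseteq> h_set (Suc l)" using assms by (simp add: Sh_def)
  then show "p w * rW (Suc l) K (Bm m) w (dv (bet m s)) x = p w * prod_list (map (hval l (mu K m s)) w) * dv (bet m s) x"
    by (simp add: rW_h)
qed


lemma Iid_eq: "a \<in> Iid n \<Longrightarrow> a = b \<Longrightarrow> b \<in> Iid n" by simp
lemma Iid_add': "a \<in> Iid n \<Longrightarrow> b \<in> Iid n \<Longrightarrow> (\<lambda>w. a w + b w) \<in> Iid n"
  using Iid.add[of a n b] by (simp add: fa_add_def)
lemma Iid_smul': "a \<in> Iid n \<Longrightarrow> (\<lambda>w. c * a w) \<in> Iid n"
  using Iid.smul[of a n c] by (simp add: fa_smul_def)
lemma Iid_neg: "a \<in> Iid n \<Longrightarrow> (\<lambda>w. - a w) \<in> Iid n"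
  using Iid_smul'[of a n "-1"] by simp
lemma Iid_diff': "a \<in> Iid n \<Longrightarrow> b \<in> Iid n \<Longrightarrow> (\<lambda>w. a w - b w) \<in> Iid n"
  using Iid_add'[OF _ Iid_neg, of a n b] by simp
lemma Iid_zero': "(\<lambda>w. 0) \<in> Iid n" by (rule Iid.zero)
lemma Iid_sum: "(\<And>i. i \<in> I \<Longrightarrow> f i \<in> Iid n) \<Longrightarrow> (\<lambda>w. \<Sum>i\<in>I. c i * f i w) \<in> Iid n"
proof (induction I rule: infinite_finite_induct)
  case (infinite A) then show ?case by (simp add: Iid_zero')
next
  case empty then show ?case by (simp add: Iid_zero')
next
  case (insert x F) then show ?case by (simp add: Iid_add' Iid_smul')
qed

lemma dl_FA: "set u \<subseteq> g_set n \<Longrightarrow> dl u \<in> FA n" by (auto simp: FA_def dl_def)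

lemma Iid_ctx: "a \<in> Iid n \<Longrightarrow> set u \<subseteq> g_set n \<Longrightarrow> set v \<subseteq> g_set n \<Longrightarrow> fa_mul (dl u) (fa_mul a (dl v)) \<in> Iid n"
  by (intro Iid.lmul Iid.rmul dl_FA)

lemma fa_mul_dl_dl_left: "fa_mul (dl u) (fa_mul (\<lambda>w. dl a w) (dl v)) = dl (u @ a @ v)"
  by (simp add: fa_mul_dl)

lemma comm_ctx: "X \<in> g_set n \<Longrightarrow> Y \<in> g_set n \<Longrightarrow> set u \<subseteq> g_set n \<Longrightarrow> set v \<subseteq> g_set n \<Longrightarrow>
  (\<lambda>w. dl (u @ [X, Y] @ v) w - dl (u @ [Y, X] @ v) w - dl (u @ [mbr n X Y] @ v) w) \<in> Iid n"
proof -
  assume a: "X \<in> g_set n" "Y \<in> g_set n" "set u \<subseteq> g_set n" "set v \<subseteq> g_set n"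
  have "fa_mul (dl u) (fa_mul (\<lambda>w. fa_mul (ltr X) (ltr Y) w - fa_mul (ltr Y) (ltr X) w - ltr (mbr n X Y) w) (dl v)) \<in> Iid n"
    by (rule Iid_ctx[OF Iid.comm]) (use a in auto)
  then show ?thesis by (simp add: ltr_dl fa_mul_dl fa_mul_diff_left fa_mul_diff_right)
qed

lemma add_ctx: "X \<in> g_set n \<Longrightarrow> Y \<in> g_set n \<Longrightarrow> set u \<subseteq> g_set n \<Longrightarrow> set v \<subseteq> g_set n \<Longrightarrow>
  (\<lambda>w. dl (u @ [madd X Y] @ v) w - dl (u @ [X] @ v) w - dl (u @ [Y] @ v) w) \<in> Iid n"
proof -
  assume a: "X \<in> g_set n" "Y \<in> g_set n" "set u \<subseteq> g_set n" "set v \<subseteq> g_set n"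
  have "fa_mul (dl u) (fa_mul (\<lambda>w. ltr (madd X Y) w - ltr X w - ltr Y w) (dl v)) \<in> Iid n"
    by (rule Iid_ctx[OF Iid.lin_add]) (use a in auto)
  then show ?thesis by (simp add: ltr_dl fa_mul_dl fa_mul_diff_left fa_mul_diff_right)
qed

lemma smul_ctx: "X \<in> g_set n \<Longrightarrow> set u \<subseteq> g_set n \<Longrightarrow> set v \<subseteq> g_set n \<Longrightarrow>
  (\<lambda>w. dl (u @ [msmul c X] @ v) w - c * dl (u @ [X] @ v) w) \<in> Iid n"
proof -
  assume a: "X \<in> g_set n" "set u \<subseteq> g_set n" "set v \<subseteq> g_set n"
  have "fa_mul (dl u) (fa_mul (\<lambda>w. ltr (msmul c X) w - c * ltr X w) (dl v)) \<in> Iid n"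
    by (rule Iid_ctx[OF Iid.lin_smul]) (use a in auto)
  then show ?thesis by (simp add: ltr_dl fa_mul_dl fa_mul_diff_left fa_mul_diff_right fa_mul_smul_left fa_mul_smul_right)
qed

lemma ad_dl: "ad X (dl w) = (\<lambda>x. dl (X # w) x - dl (w @ [X]) x)"
  by (simp add: ad_def fa_diff_def ltr_dl fa_mul_dl)

lemma ad_Iid: "X \<in> g_set n \<Longrightarrow> a \<in> Iid n \<Longrightarrow> ad X a \<in> Iid n"
  unfolding ad_def fa_diff_def
  by (intro Iid_diff' Iid.lmul Iid.rmul) (auto simp: ltr_dl dl_FA)

lemma ad_lin: "fin a \<Longrightarrow> fin b \<Longrightarrow> ad X (\<lambda>w. c * a w + d * b w) = (\<lambda>w. c * ad X a w + d * ad X b w)"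
  by (simp add: ad_def fa_diff_def fa_mul_lin_left fa_mul_lin_right algebra_simps)

lemma ad_diff: "ad X (\<lambda>w. a w - b w) = (\<lambda>w. ad X a w - ad X b w)"
  by (simp add: ad_def fa_diff_def fa_mul_diff_left fa_mul_diff_right algebra_simps)

lemma ad_sum: "ad X (\<lambda>w. \<Sum>i\<in>I. c i * f i w) = (\<lambda>w. \<Sum>i\<in>I. c i * ad X (f i) w)"
  by (simp add: ad_def fa_diff_def fa_mul_sum_left fa_mul_sum_right sum_subtractf algebra_simps)

definition Tw :: "nat \<Rightarrow> mat \<Rightarrow> mat list \<Rightarrow> fa" where
  "Tw n X w = (case w of [] \<Rightarrow> (\<lambda>x. 0) | [A] \<Rightarrow> dl [mbr n X A]
      | [A, B] \<Rightarrow> (\<lambda>x. dl [mbr n X A, B] x + dl [A, mbr n X B] x) | _ \<Rightarrow> (\<lambda>x. 0))"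

lemma Tw_cong:
  assumes "X \<in> g_set n" "length w \<le> 2" "set w \<subseteq> g_set n"
  shows "(\<lambda>x. ad X (dl w) x - Tw n X w x) \<in> Iid n"
proof -
  consider "w = []" | A where "w = [A]" | A B where "w = [A, B]"
    using assms(2) by (cases w rule: remdups_adj.cases) auto
  then show ?thesis
  proof cases
    case 1 then show ?thesis by (simp add: ad_dl Tw_def Iid_zero')
  next
    case 2
    then show ?thesis using comm_ctx[of X n A "[]" "[]"] assms by (simp add: ad_dl Tw_def)
  next
    case 3
    have i1: "(\<lambda>w. dl ([] @ [X, A] @ [B]) w - dl ([] @ [A, X] @ [B]) w - dl ([] @ [mbr n X A] @ [B]) w) \<in> Iid n"
      by (rule comm_ctx) (use assms 3 in auto)
    have i2: "(\<lambda>w. dl ([A] @ [X, B] @ []) w - dl ([A] @ [B, X] @ []) w - dl ([A] @ [mbr n X B] @ []) w) \<in> Iid n"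
      by (rule comm_ctx) (use assms 3 in auto)
    show ?thesis
      by (rule Iid_eq[OF Iid_add'[OF i1 i2]], rule ext) (simp add: 3 ad_dl Tw_def)
  qed
qed

lemma U2_fin: "U2 n u \<Longrightarrow> fin u" by (simp add: U2_def)

lemma fin_sum: "finite I \<Longrightarrow> (\<And>i. i \<in> I \<Longrightarrow> fin (f i)) \<Longrightarrow> fin (\<lambda>w. \<Sum>i\<in>I. c i * f i w)"
proof (induction I rule: finite_induct)
  case empty then show ?case by (simp add: fin_zero)
next
  case (insert x F) then show ?case by (simp add: fin_add fin_smul)
qed

lemma U2_sum: "finite I \<Longrightarrow> (\<And>i. i \<in> I \<Longrightarrow> U2 n (f i)) \<Longrightarrow> U2 n (\<lambda>w. \<Sum>i\<in>I. c i * f i w)"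
proof (induction I rule: finite_induct)
  case empty then show ?case by (simp add: U2_def fin_zero)
next
  case (insert x F)
  then have A: "U2 n (f x)" and B: "U2 n (\<lambda>w. \<Sum>i\<in>F. c i * f i w)" by auto
  have "fin (\<lambda>w. c x * f x w + (\<Sum>i\<in>F. c i * f i w))"
    using A B by (simp add: U2_def fin_add fin_smul)
  moreover have "length w \<le> 2 \<and> set w \<subseteq> g_set n" if "c x * f x w + (\<Sum>i\<in>F. c i * f i w) \<noteq> 0" for w
  proof -
    have "f x w \<noteq> 0 \<or> (\<Sum>i\<in>F. c i * f i w) \<noteq> 0" using that by auto
    then show ?thesis using A B unfolding U2_def by blast
  qed
  ultimately show ?case using insert(1,2) unfolding U2_def by simp
qed

lemma U2_dl: "length w \<le> 2 \<Longrightarrow> set w \<subseteq> g_set n \<Longrightarrow> U2 n (dl w)"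
  by (simp add: U2_def fin_dl) (simp add: dl_def)

lemma U2_Tw: "X \<in> g_set n \<Longrightarrow> length w \<le> 2 \<Longrightarrow> set w \<subseteq> g_set n \<Longrightarrow> U2 n (Tw n X w)"
proof -
  assume a: "X \<in> g_set n" "length w \<le> 2" "set w \<subseteq> g_set n"
  consider "w = []" | A where "w = [A]" | A B where "w = [A, B]"
    using a(2) by (cases w rule: remdups_adj.cases) auto
  then show ?thesis
  proof cases
    case 1 then show ?thesis by (simp add: Tw_def U2_def fin_zero)
  next
    case 2 then show ?thesis using a by (simp add: Tw_def U2_dl mbr_g)
  next
    case 3
    have m1: "mbr n X A \<in> g_set n" "mbr n X B \<in> g_set n" "A \<in> g_set n" "B \<in> g_set n"
      using a 3 by (auto intro!: mbr_g)
    have "fin (\<lambda>x. dl [mbr n X A, B] x + dl [A, mbr n X B] x)" by (simp add: fin_add fin_dl)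
    moreover have "length x \<le> 2 \<and> set x \<subseteq> g_set n" if "dl [mbr n X A, B] x + dl [A, mbr n X B] x \<noteq> 0" for x
    proof -
      have "x = [mbr n X A, B] \<or> x = [A, mbr n X B]" using that by (auto simp: dl_def split: if_splits)
      then show ?thesis using m1 by auto
    qed
    ultimately show ?thesis unfolding Tw_def 3 U2_def by simp
  qed
qed

lemma ad_U2:
  assumes "X \<in> g_set n" "U2 n u"
  shows "\<exists>u'. U2 n u' \<and> (\<lambda>x. ad X u x - u' x) \<in> Iid n"
proof -
  let ?S = "{w. u w \<noteq> 0}"
  have fS: "finite ?S" using assms(2) by (simp add: U2_def fin_def)
  have ws: "length w \<le> 2 \<and> set w \<subseteq> g_set n" if "w \<in> ?S" for w using assms(2) that by (simp add: U2_def)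
  define u' where "u' = (\<lambda>x. \<Sum>w\<in>?S. u w * Tw n X w x)"
  have "U2 n u'" unfolding u'_def by (rule U2_sum[OF fS]) (use ws U2_Tw assms(1) in auto)
  moreover have "(\<lambda>x. ad X u x - u' x) \<in> Iid n"
  proof -
    have "ad X u = (\<lambda>x. \<Sum>w\<in>?S. u w * ad X (dl w) x)"
      by (subst fin_decomp[OF U2_fin[OF assms(2)]]) (simp add: ad_sum)
    then have "(\<lambda>x. ad X u x - u' x) = (\<lambda>x. \<Sum>w\<in>?S. u w * (\<lambda>x. ad X (dl w) x - Tw n X w x) x)"
      by (simp add: u'_def sum_subtractf algebra_simps)
    moreover have "(\<lambda>x. \<Sum>w\<in>?S. u w * (\<lambda>x. ad X (dl w) x - Tw n X w x) x) \<in> Iid n"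
      by (rule Iid_sum) (use ws Tw_cong assms(1) in auto)
    ultimately show ?thesis by simp
  qed
  ultimately show ?thesis by blast
qed


lemma U2_lin: assumes "U2 n a" "U2 n b" shows "U2 n (\<lambda>w. c * a w + d * b w)"
proof -
  have "fin (\<lambda>w. c * a w + d * b w)" using assms by (simp add: U2_def fin_lin)
  moreover have "length w \<le> 2 \<and> set w \<subseteq> g_set n" if "c * a w + d * b w \<noteq> 0" for w
  proof -
    have "a w \<noteq> 0 \<or> b w \<noteq> 0" using that by auto
    then show ?thesis using assms unfolding U2_def by blast
  qed
  ultimately show ?thesis by (simp add: U2_def)
qed

lemma U2_zero: "U2 n (\<lambda>w. 0)" by (simp add: U2_def fin_zero)

lemma eroot_g: "i \<noteq> j \<Longrightarrow> i \<in> {1..n} \<Longrightarrow> j \<in> {1..n} \<Longrightarrow> eroot i j \<in> g_set n"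
proof -
  assume a: "i \<noteq> j" "i \<in> {1..n}" "j \<in> {1..n}"
  have "(\<Sum>k=1..n. eroot i j k k) = 0" using a(1) by (intro sum.neutral) (auto simp: eroot_def msmul_def Eu_def)
  then show ?thesis using a by (auto simp: g_set_def eroot_def msmul_def Eu_def split: if_splits)
qed

lemma vprime_dl: "vprime l = (\<lambda>w. dl [eroot 1 (l+1), eroot 2 l] w - dl [eroot 2 (l+1), eroot 1 l] w)"
  by (simp add: vprime_def fa_diff_def ltr_dl fa_mul_dl)

lemma vprime_U2: assumes "3 \<le> l" shows "U2 (Suc l) (vprime l)"
proof -
  have g: "eroot 1 (l+1) \<in> g_set (Suc l)" "eroot 2 l \<in> g_set (Suc l)" "eroot 2 (l+1) \<in> g_set (Suc l)" "eroot 1 l \<in> g_set (Suc l)"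
    using assms by (auto intro!: eroot_g)
  have "U2 (Suc l) (\<lambda>w. 1 * dl [eroot 1 (l+1), eroot 2 l] w + (-1) * dl [eroot 2 (l+1), eroot 1 l] w)"
    by (intro U2_lin U2_dl) (use g in auto)
  then show ?thesis by (simp add: vprime_dl)
qed

lemma Rt_U2: assumes "r \<in> Rt l" "3 \<le> l" shows "\<exists>u. U2 (Suc l) u \<and> (\<lambda>w. r w - u w) \<in> Iid (Suc l)"
  using assms(1)
proof (induction rule: Rt.induct)
  case gen
  show ?case using vprime_U2[OF assms(2)] Iid_zero' by auto
next
  case (ideal a)
  then show ?case by (intro exI[of _ "\<lambda>w. 0"]) (simp add: U2_zero)
next
  case (add a b)
  then obtain ua ub where h: "U2 (Suc l) ua" "(\<lambda>w. a w - ua w) \<in> Iid (Suc l)" "U2 (Suc l) ub" "(\<lambda>w. b w - ub w) \<in> Iid (Suc l)"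
    by auto
  have "U2 (Suc l) (\<lambda>w. 1 * ua w + 1 * ub w)" using h by (intro U2_lin)
  moreover have "(\<lambda>w. fa_add a b w - (1 * ua w + 1 * ub w)) = (\<lambda>w. (a w - ua w) + (b w - ub w))"
    by (simp add: fa_add_def algebra_simps)
  moreover have "(\<lambda>w. (a w - ua w) + (b w - ub w)) \<in> Iid (Suc l)" using h by (intro Iid_add')
  ultimately show ?case by auto
next
  case (smul a c)
  then obtain ua where h: "U2 (Suc l) ua" "(\<lambda>w. a w - ua w) \<in> Iid (Suc l)" by auto
  have "U2 (Suc l) (\<lambda>w. c * ua w + 0 * ua w)" using h by (intro U2_lin)
  moreover have "(\<lambda>w. fa_smul c a w - (c * ua w + 0 * ua w)) = (\<lambda>w. c * (a w - ua w))"
    by (simp add: fa_smul_def algebra_simps)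
  moreover have "(\<lambda>w. c * (a w - ua w)) \<in> Iid (Suc l)" using h by (intro Iid_smul')
  ultimately show ?case by auto
next
  case (adj X a)
  then obtain ua where ua: "U2 (Suc l) ua" "(\<lambda>w. a w - ua w) \<in> Iid (Suc l)" by auto
  obtain u' where u': "U2 (Suc l) u'" "(\<lambda>x. ad X ua x - u' x) \<in> Iid (Suc l)"
    using ad_U2[OF _ ua(1)] adj(1) by auto
  have "ad X (\<lambda>w. a w - ua w) \<in> Iid (Suc l)" using adj(1) ua(2) by (simp add: ad_Iid)
  then have "(\<lambda>w. ad X a w - ad X ua w) \<in> Iid (Suc l)" by (simp add: ad_diff)
  from Iid_add'[OF this u'(2)] have "(\<lambda>w. ad X a w - u' w) \<in> Iid (Suc l)" by simp
  then show ?case using u'(1) by auto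
qed

lemma opE_1: "opE (Suc 0) B a b f = Xop B (0,a) (Dop B (0,b) f)"
  by (simp add: opE_def)

lemma DX_ne: "e \<noteq> e' \<Longrightarrow> Dop B e (Xop B e' f) = Xop B e' (Dop B e f)"
  by (simp add: DX)

lemma vprime_rF1: assumes "3 \<le> l" shows "rF (Suc l) (Suc 0) B (vprime l) f = (\<lambda>x. 0)"
proof -
  have r: "\<And>i j. i \<in> {1..Suc l} \<Longrightarrow> j \<in> {1..Suc l} \<Longrightarrow> rho (Suc l) (Suc 0) B (eroot i j) g = (\<lambda>x. (-1)^(j-i-1) * Xop B (0,i) (Dop B (0,j) g) x)" for g
    by (simp add: eroot_def rho_msmul rho_Eu opE_1)
  define k where "k = l - 3"
  have k: "l = Suc (Suc (Suc k))" using assms by (simp add: k_def)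
  have sg: "((-1::complex)^k * (-1)^k) = 1" by (simp add: power_mult_distrib[symmetric])
  have c: "Xop B (0,1) (Dop B (0,Suc l) (Xop B (0,2) (Dop B (0,l) f))) = Xop B (0,2) (Dop B (0,Suc l) (Xop B (0,1) (Dop B (0,l) f)))"
  proof -
    have "Xop B (0,1) (Dop B (0,Suc l) (Xop B (0,2) (Dop B (0,l) f))) = Xop B (0,1) (Xop B (0,2) (Dop B (0,Suc l) (Dop B (0,l) f)))"
      using assms by (simp add: DX_ne)
    also have "\<dots> = Xop B (0,2) (Xop B (0,1) (Dop B (0,Suc l) (Dop B (0,l) f)))" by (rule XX)
    also have "\<dots> = Xop B (0,2) (Dop B (0,Suc l) (Xop B (0,1) (Dop B (0,l) f)))"
      using assms by (simp add: DX_ne)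
    finally show ?thesis .
  qed
  have "rF (Suc l) (Suc 0) B (vprime l) f = (\<lambda>x. rho (Suc l) (Suc 0) B (eroot 1 (Suc l)) (rho (Suc l) (Suc 0) B (eroot 2 l) f) x
      - rho (Suc l) (Suc 0) B (eroot 2 (Suc l)) (rho (Suc l) (Suc 0) B (eroot 1 l) f) x)"
    by (simp add: vprime_dl rF_diff fin_dl rF_dl)
  also have "\<dots> = (\<lambda>x. 0)"
    using assms c sg by (simp add: r lin_smul[OF lin_Xop] lin_smul[OF lin_Dop]) (simp add: k)
  finally show ?thesis .
qed

lemma Rt_rF1: assumes "r \<in> Rt l" "3 \<le> l" shows "rF (Suc l) (Suc 0) B r f = (\<lambda>x. 0)"
  using assms(1)
proof (induction arbitrary: f rule: Rt.induct)
  case gen then show ?case by (rule vprime_rF1[OF assms(2)])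
next
  case (ideal a) then show ?case by (simp add: Iid_rF)
next
  case (add a b) then show ?case by (simp add: fa_add_def rF_add Rt_fin)
next
  case (smul a c) then show ?case by (simp add: fa_smul_def rF_smul Rt_fin)
next
  case (adj X a)
  then show ?case
    by (simp add: ad_def fa_diff_def rF_diff rF_mul fin_mul fin_ltr Rt_fin ltr_dl fin_dl rF_dl lin_zero[OF lin_rho])
qed


definition Gu :: "nat \<Rightarrow> fa \<Rightarrow> (nat \<Rightarrow> complex) \<Rightarrow> complex" where
  "Gu l u x = (\<Sum>w\<in>{w. u w \<noteq> 0}. u w * gw l x w)"

lemma key_eq:
  assumes r: "r \<in> Rt l" and p: "p \<in> Sh (Suc l)" and rp: "fa_diff r p \<in> Jn (Suc l)"
    and u: "U2 (Suc l) u" and ru: "(\<lambda>w. r w - u w) \<in> Iid (Suc l)"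
  shows "evalS l (mu K m s) p = Gu l u (mu K m s)"
proof -
  have fr: "fin r" using r by (rule Rt_fin)
  have fp: "fin p" using p unfolding Sh_def by (auto intro: FA_fin)
  have fu: "fin u" using u by (rule U2_fin)
  have "rF (Suc l) K (Bm m) (\<lambda>w. r w - p w) (dv (bet m s)) = (\<lambda>x. 0)"
    using Jn_rF[OF rp] by (simp add: fa_diff_def)
  then have 1: "rF (Suc l) K (Bm m) r (dv (bet m s)) = rF (Suc l) K (Bm m) p (dv (bet m s))"
    by (simp add: rF_diff fr fp fun_eq_iff)
  have "rF (Suc l) K (Bm m) (\<lambda>w. r w - u w) (dv (bet m s)) = (\<lambda>x. 0)"
    using Iid_rF[OF ru] by simp
  then have 2: "rF (Suc l) K (Bm m) r (dv (bet m s)) = rF (Suc l) K (Bm m) u (dv (bet m s))"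
    by (simp add: rF_diff fr fu fun_eq_iff)
  have "evalS l (mu K m s) p = rF (Suc l) K (Bm m) p (dv (bet m s)) (bet m s)"
    by (simp add: Sh_rF[OF p]) (simp add: dv_def)
  also have "\<dots> = rF (Suc l) K (Bm m) u (dv (bet m s)) (bet m s)" using 1 2 by simp
  also have "\<dots> = Gu l u (mu K m s)" by (simp add: pi_rF_U2[OF u] Gu_def)
  finally show ?thesis .
qed

lemma key_zero:
  assumes r: "r \<in> Rt l" and l3: "3 \<le> l" and u: "U2 (Suc l) u" and ru: "(\<lambda>w. r w - u w) \<in> Iid (Suc l)"
  shows "Gu l u (mu (Suc 0) m s) = 0"
proof -
  have fr: "fin r" using r by (rule Rt_fin)
  have fu: "fin u" using u by (rule U2_fin)
  have "rF (Suc l) (Suc 0) (Bm m) (\<lambda>w. r w - u w) (dv (bet m s)) = (\<lambda>x. 0)"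
    using Iid_rF[OF ru] by simp
  then have 2: "rF (Suc l) (Suc 0) (Bm m) r (dv (bet m s)) = rF (Suc l) (Suc 0) (Bm m) u (dv (bet m s))"
    by (simp add: rF_diff fr fu fun_eq_iff)
  have "Gu l u (mu (Suc 0) m s) = rF (Suc l) (Suc 0) (Bm m) u (dv (bet m s)) (bet m s)"
    by (simp add: pi_rF_U2[OF u] Gu_def)
  also have "\<dots> = 0"
  proof -
    have "rF (Suc l) (Suc 0) (Bm m) r (dv (bet m s)) = (\<lambda>x. 0)" by (rule Rt_rF1[OF r l3])
    then show ?thesis using 2 by (metis)
  qed
  finally show ?thesis .
qed

lemma lam_diff: "lam m s (k,i) - lam m s (k, i+1) = (if i = m k then -1 - s k else if i = m k + 1 then s k else 0)"
  by (auto simp: lam_def)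

lemma mu_formula: "mu K m s i = (\<Sum>k<K. if i = m k then -1 - s k else if i = m k + 1 then s k else 0)"
  by (simp add: mu_def Lam_def sum_subtractf[symmetric] lam_diff del: One_nat_def)

lemma mu_1: "mu (Suc 0) m s i = (if i = m 0 then -1 - s 0 else if i = m 0 + 1 then s 0 else 0)"
  by (simp add: mu_formula)

definition sx :: "nat \<Rightarrow> (nat \<Rightarrow> complex) \<Rightarrow> nat \<Rightarrow> complex" where
  "sx l x k = (\<Sum>j\<in>{k+1..l}. x j + 1)"

lemma mu_univ: assumes "i \<in> {1..l}" shows "mu (Suc l) (\<lambda>k. k) (sx l x) i = x i"
proof -
  obtain j where j: "i = Suc j" using assms by (cases i) auto
  have "mu (Suc l) (\<lambda>k. k) (sx l x) i = (\<Sum>k<Suc l. (if k = i then -1 - sx l x k else 0) + (if k = j then sx l x k else 0))"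
    unfolding mu_formula by (intro sum.cong refl) (auto simp: j)
  also have "\<dots> = -1 - sx l x i + sx l x j" using assms j by (simp add: sum.distrib)
  also have "\<dots> = x i"
  proof -
    have "{j+1..l} = insert i {i+1..l}" using assms j by auto
    then have "sx l x j = (x i + 1) + sx l x i" by (simp add: sx_def)
    then show ?thesis by simp
  qed
  finally show ?thesis .
qed

lemma hval_cong: "\<forall>i\<in>{1..l}. x i = y i \<Longrightarrow> hval l x = hval l y"
  by (auto simp: hval_def fun_eq_iff)

lemma gw_cong: "\<forall>i\<in>{1..l}. x i = y i \<Longrightarrow> gw l x = gw l y"
proof
  fix w assume a: "\<forall>i\<in>{1..l}. x i = y i"
  show "gw l x w = gw l y w" using hval_cong[OF a]
    by (induction l x w rule: gw.induct) simp_all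
qed

lemma Gu_cong: "\<forall>i\<in>{1..l}. x i = y i \<Longrightarrow> Gu l u x = Gu l u y"
  unfolding Gu_def by (simp add: gw_cong[of l x y])

lemma evalS_cong: "\<forall>i\<in>{1..l}. x i = y i \<Longrightarrow> evalS l x p = evalS l y p"
  unfolding evalS_def by (simp add: hval_cong[of l x y])

lemma evalS_Gu:
  assumes r: "r \<in> Rt l" and p: "p \<in> Sh (Suc l)" and rp: "fa_diff r p \<in> Jn (Suc l)"
    and u: "U2 (Suc l) u" and ru: "(\<lambda>w. r w - u w) \<in> Iid (Suc l)"
  shows "evalS l x p = Gu l u x"
proof -
  have e: "\<And>i. i \<in> {1..l} \<Longrightarrow> mu (Suc l) (\<lambda>k. k) (sx l x) i = x i" by (rule mu_univ)
  have "evalS l x p = evalS l (mu (Suc l) (\<lambda>k. k) (sx l x)) p" using e by (intro evalS_cong) auto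
  also have "\<dots> = Gu l u (mu (Suc l) (\<lambda>k. k) (sx l x))" by (rule key_eq[OF r p rp u ru])
  also have "\<dots> = Gu l u x" using e by (intro Gu_cong) auto
  finally show ?thesis .
qed


definition cg :: "nat \<Rightarrow> fa \<Rightarrow> fa \<Rightarrow> bool" where
  "cg n f g \<longleftrightarrow> (\<lambda>w. f w - g w) \<in> Iid n"

lemma cg_refl: "cg n f f" by (simp add: cg_def Iid_zero')
lemma cg_sym: "cg n f g \<Longrightarrow> cg n g f"
  unfolding cg_def by (drule Iid_neg) simp
lemma cg_trans: "cg n f g \<Longrightarrow> cg n g h \<Longrightarrow> cg n f h"
  unfolding cg_def by (drule (1) Iid_add') simp
lemma cg_lin: "cg n f f' \<Longrightarrow> cg n g g' \<Longrightarrow> cg n (\<lambda>w. a * f w + b * g w) (\<lambda>w. a * f' w + b * g' w)"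
  unfolding cg_def by (drule Iid_smul'[of _ _ a], drule Iid_smul'[of _ _ b], drule (1) Iid_add') (simp add: algebra_simps)
lemma cg_add: "cg n f f' \<Longrightarrow> cg n g g' \<Longrightarrow> cg n (\<lambda>w. f w + g w) (\<lambda>w. f' w + g' w)"
  using cg_lin[of n f f' g g' 1 1] by simp
lemma cg_diff: "cg n f f' \<Longrightarrow> cg n g g' \<Longrightarrow> cg n (\<lambda>w. f w - g w) (\<lambda>w. f' w - g' w)"
  using cg_lin[of n f f' g g' 1 "-1"] by simp
lemma cg_smul: "cg n f f' \<Longrightarrow> cg n (\<lambda>w. a * f w) (\<lambda>w. a * f' w)"
  using cg_lin[of n f f' f f' a 0] by simp
lemma cg_Iid: "cg n f g \<longleftrightarrow> (\<lambda>w. f w - g w) \<in> Iid n" by (simp add: cg_def)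

lemma cg_ad: "X \<in> g_set n \<Longrightarrow> cg n f g \<Longrightarrow> cg n (ad X f) (ad X g)"
  unfolding cg_def using ad_Iid[of X n "\<lambda>w. f w - g w"] by (simp add: ad_diff)

lemma Rt_cg: "r \<in> Rt l \<Longrightarrow> cg (Suc l) f r \<Longrightarrow> f \<in> Rt l"
proof -
  assume r: "r \<in> Rt l" and c: "cg (Suc l) f r"
  have "fa_add r (\<lambda>w. f w - r w) \<in> Rt l" using Rt.add[OF r Rt.ideal] c by (simp add: cg_def)
  then show ?thesis by (simp add: fa_add_def)
qed

lemma Rt_smul': "r \<in> Rt l \<Longrightarrow> (\<lambda>w. c * r w) \<in> Rt l"
  using Rt.smul[of r l c] by (simp add: fa_smul_def)
lemma Rt_neg: "r \<in> Rt l \<Longrightarrow> (\<lambda>w. - r w) \<in> Rt l"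
  using Rt_smul'[of r l "-1"] by simp

lemma Eu_g: "a \<noteq> b \<Longrightarrow> a \<in> {1..n} \<Longrightarrow> b \<in> {1..n} \<Longrightarrow> Eu a b \<in> g_set n"
proof -
  assume a: "a \<noteq> b" "a \<in> {1..n}" "b \<in> {1..n}"
  have "(\<Sum>k=1..n. Eu a b k k) = 0" using a(1) by (intro sum.neutral) (auto simp: Eu_def)
  then show ?thesis using a by (auto simp: g_set_def Eu_def split: if_splits)
qed

lemma mmul_Eu: "b \<in> {1..n} \<Longrightarrow> mmul n (Eu a b) (Eu c d) = (if b = c then Eu a d else (\<lambda>i j. 0))"
proof (intro ext)
  fix i j assume b: "b \<in> {1..n}"
  have "mmul n (Eu a b) (Eu c d) i j = (\<Sum>k=1..n. if k = b then (if i = a \<and> b = c \<and> j = d then 1 else 0) else 0)"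
    unfolding mmul_def Eu_def by (intro sum.cong refl) auto
  also have "\<dots> = (if i = a \<and> b = c \<and> j = d then 1 else 0)" using b by simp
  finally show "mmul n (Eu a b) (Eu c d) i j = (if b = c then Eu a d else (\<lambda>i j. 0)) i j" by (auto simp: Eu_def)
qed

definition Dg :: "nat \<Rightarrow> nat \<Rightarrow> mat" where
  "Dg a b = (\<lambda>i j. (if i = a \<and> j = a then 1 else 0) - (if i = b \<and> j = b then 1 else 0))"

lemma mbr_Eu0: "b \<in> {1..n} \<Longrightarrow> d \<in> {1..n} \<Longrightarrow> b \<noteq> c \<Longrightarrow> d \<noteq> a \<Longrightarrow> mbr n (Eu a b) (Eu c d) = (\<lambda>i j. 0)"
  by (simp add: mbr_def mmul_Eu)
lemma mbr_Eu1: "b \<in> {1..n} \<Longrightarrow> d \<in> {1..n} \<Longrightarrow> d \<noteq> a \<Longrightarrow> mbr n (Eu a b) (Eu b d) = Eu a d"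
  by (simp add: mbr_def mmul_Eu)
lemma mbr_Eu2: "b \<in> {1..n} \<Longrightarrow> a \<in> {1..n} \<Longrightarrow> b \<noteq> c \<Longrightarrow> mbr n (Eu a b) (Eu c a) = msmul (-1) (Eu c b)"
  by (auto simp: mbr_def mmul_Eu msmul_def fun_eq_iff)
lemma mbr_Eu3: "b \<in> {1..n} \<Longrightarrow> a \<in> {1..n} \<Longrightarrow> a \<noteq> b \<Longrightarrow> mbr n (Eu a b) (Eu b a) = Dg a b"
  by (simp add: mbr_def mmul_Eu) (auto simp: Dg_def Eu_def fun_eq_iff)

lemma Dg_h: "a \<noteq> b \<Longrightarrow> a \<in> {1..n} \<Longrightarrow> b \<in> {1..n} \<Longrightarrow> Dg a b \<in> h_set n"
proof -
  assume a: "a \<noteq> b" "a \<in> {1..n}" "b \<in> {1..n}"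
  have "(\<Sum>k=1..n. Dg a b k k) = (\<Sum>k=1..n. (if k = a then 1 else 0) - (if k = b then 1 else 0))"
    by (intro sum.cong refl) (auto simp: Dg_def)
  also have "\<dots> = 0" using a by (simp add: sum_subtractf)
  finally show ?thesis using a by (auto simp: h_set_def g_set_def Dg_def split: if_splits)
qed

lemma diag_mbr: assumes "\<And>i j. i \<noteq> j \<Longrightarrow> H i j = 0" "\<And>i j. i \<noteq> j \<Longrightarrow> D i j = 0"
  shows "mbr n H D = (\<lambda>i j. 0)"
proof (intro ext)
  fix i j
  have "mmul n H D i j = mmul n D H i j"
    unfolding mmul_def by (intro sum.cong refl) (metis assms mult_zero_left mult_zero_right mult.commute)
  then show "mbr n H D i j = 0" by (simp add: mbr_def)
qed

lemma mbr_H_Eu: assumes "\<And>i j. i \<noteq> j \<Longrightarrow> H i j = 0" "a \<in> {1..n}" "b \<in> {1..n}"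
  shows "mbr n H (Eu a b) = msmul (H a a - H b b) (Eu a b)"
proof (intro ext)
  fix i j
  have 1: "mmul n H (Eu a b) i j = (if i = a \<and> j = b then H a a else 0)"
  proof -
    have "mmul n H (Eu a b) i j = (\<Sum>k=1..n. if k = a then (if i = a \<and> j = b then H a a else 0) else 0)"
      unfolding mmul_def Eu_def using assms(1) by (intro sum.cong refl) auto
    then show ?thesis using assms by simp
  qed
  have 2: "mmul n (Eu a b) H i j = (if i = a \<and> j = b then H b b else 0)"
  proof -
    have "mmul n (Eu a b) H i j = (\<Sum>k=1..n. if k = b then (if i = a \<and> j = b then H b b else 0) else 0)"
      unfolding mmul_def Eu_def using assms(1) by (intro sum.cong refl) auto
    then show ?thesis using assms by simp
  qed
  show "mbr n H (Eu a b) i j = msmul (H a a - H b b) (Eu a b) i j"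
    unfolding mbr_def 1 2 by (auto simp: msmul_def Eu_def)
qed

lemma Dg_diag: "i \<noteq> j \<Longrightarrow> Dg a b i j = 0" by (simp add: Dg_def)

lemma zero_g: "(\<lambda>i j. 0) \<in> g_set n" by (simp add: g_set_def)

lemma cg_zero2: "Y \<in> g_set n \<Longrightarrow> cg n (dl [Y, (\<lambda>i j. 0)]) (\<lambda>w. 0)"
proof -
  assume Y: "Y \<in> g_set n"
  have "(\<lambda>w. dl ([Y] @ [msmul 0 (\<lambda>i j. 0)] @ []) w - 0 * dl ([Y] @ [(\<lambda>i j. 0)] @ []) w) \<in> Iid n"
    by (rule smul_ctx) (use Y zero_g in auto)
  then show ?thesis by (simp add: cg_def msmul_def)
qed

lemma cg_zero1: "Y \<in> g_set n \<Longrightarrow> cg n (dl [(\<lambda>i j. 0), Y]) (\<lambda>w. 0)"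
proof -
  assume Y: "Y \<in> g_set n"
  have "(\<lambda>w. dl ([] @ [msmul 0 (\<lambda>i j. 0)] @ [Y]) w - 0 * dl ([] @ [(\<lambda>i j. 0)] @ [Y]) w) \<in> Iid n"
    by (rule smul_ctx) (use Y zero_g in auto)
  then show ?thesis by (simp add: cg_def msmul_def)
qed

lemma cg_sm2: "Y \<in> g_set n \<Longrightarrow> X \<in> g_set n \<Longrightarrow> cg n (dl [Y, msmul c X]) (\<lambda>w. c * dl [Y, X] w)"
proof -
  assume Y: "Y \<in> g_set n" and X: "X \<in> g_set n"
  have "(\<lambda>w. dl ([Y] @ [msmul c X] @ []) w - c * dl ([Y] @ [X] @ []) w) \<in> Iid n"
    by (rule smul_ctx) (use Y X in auto)
  then show ?thesis by (simp add: cg_def)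
qed

lemma cg_sm1: "Y \<in> g_set n \<Longrightarrow> X \<in> g_set n \<Longrightarrow> cg n (dl [msmul c X, Y]) (\<lambda>w. c * dl [X, Y] w)"
proof -
  assume Y: "Y \<in> g_set n" and X: "X \<in> g_set n"
  have "(\<lambda>w. dl ([] @ [msmul c X] @ [Y]) w - c * dl ([] @ [X] @ [Y]) w) \<in> Iid n"
    by (rule smul_ctx) (use Y X in auto)
  then show ?thesis by (simp add: cg_def)
qed

lemma cg_comm2: "X \<in> g_set n \<Longrightarrow> Y \<in> g_set n \<Longrightarrow> cg n (dl [X, Y]) (\<lambda>w. dl [Y, X] w + dl [mbr n X Y] w)"
proof -
  assume X: "X \<in> g_set n" and Y: "Y \<in> g_set n"
  have "(\<lambda>w. dl ([] @ [X, Y] @ []) w - dl ([] @ [Y, X] @ []) w - dl ([] @ [mbr n X Y] @ []) w) \<in> Iid n"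
    by (rule comm_ctx) (use X Y in auto)
  then show ?thesis by (simp add: cg_def algebra_simps)
qed

lemma cg_ad2: "X \<in> g_set n \<Longrightarrow> A \<in> g_set n \<Longrightarrow> B \<in> g_set n \<Longrightarrow>
   cg n (ad X (dl [A, B])) (\<lambda>w. dl [mbr n X A, B] w + dl [A, mbr n X B] w)"
  using Tw_cong[of X n "[A, B]"] by (simp add: cg_def Tw_def)


lemma cg_eq: "cg n f g \<Longrightarrow> g = h \<Longrightarrow> cg n f h" by simp
lemma cg_eq': "f = g \<Longrightarrow> cg n g h \<Longrightarrow> cg n f h" by simp

lemma ad_add: "ad X (\<lambda>w. a w + b w) = (\<lambda>w. ad X a w + ad X b w)"
  by (simp add: ad_def fa_diff_def fa_mul_add_left fa_mul_add_right algebra_simps)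

lemma cg_zero0: "cg n (dl [(\<lambda>i j. 0)]) (\<lambda>w. 0)"
proof -
  have "(\<lambda>w. ltr (msmul 0 (\<lambda>i j. 0)) w - 0 * ltr (\<lambda>i j. 0) w) \<in> Iid n" by (rule Iid.lin_smul) (rule zero_g)
  then show ?thesis by (simp add: cg_def msmul_def ltr_dl)
qed

definition Mn :: "nat \<Rightarrow> nat \<Rightarrow> nat \<Rightarrow> nat \<Rightarrow> fa" where
  "Mn a b c d = (\<lambda>w. dl [Eu a c, Eu b d] w - dl [Eu b c, Eu a d] w)"

lemma move_row:
  assumes "distinct [a,b,c,d,t]" "a \<in> {1..n}" "b \<in> {1..n}" "c \<in> {1..n}" "d \<in> {1..n}" "t \<in> {1..n}"
  shows "cg n (ad (Eu t a) (Mn a b c d)) (Mn t b c d)"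
proof -
  have ne[simp]: "a \<noteq> b" "a \<noteq> c" "a \<noteq> d" "a \<noteq> t" "b \<noteq> a" "b \<noteq> c" "b \<noteq> d" "b \<noteq> t" "c \<noteq> a" "c \<noteq> b" "c \<noteq> d" "c \<noteq> t" "d \<noteq> a" "d \<noteq> b" "d \<noteq> c" "d \<noteq> t" "t \<noteq> a" "t \<noteq> b" "t \<noteq> c" "t \<noteq> d" using assms(1) by auto
  have rg[simp]: "a \<in> {1..n}" "b \<in> {1..n}" "c \<in> {1..n}" "d \<in> {1..n}" "t \<in> {1..n}" using assms by auto
  have g[simp]: "Eu a b \<in> g_set n" "Eu a c \<in> g_set n" "Eu a d \<in> g_set n" "Eu a t \<in> g_set n" "Eu b a \<in> g_set n" "Eu b c \<in> g_set n" "Eu b d \<in> g_set n" "Eu b t \<in> g_set n" "Eu c a \<in> g_set n" "Eu c b \<in> g_set n" "Eu c d \<in> g_set n" "Eu c t \<in> g_set n" "Eu d a \<in> g_set n" "Eu d b \<in> g_set n" "Eu d c \<in> g_set n" "Eu d t \<in> g_set n" "Eu t a \<in> g_set n" "Eu t b \<in> g_set n" "Eu t c \<in> g_set n" "Eu t d \<in> g_set n" using assms by (auto intro!: Eu_g)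
  have 1: "cg n (ad (Eu t a) (dl [Eu a c, Eu b d])) (\<lambda>w. dl [Eu t c, Eu b d] w + dl [Eu a c, (\<lambda>i j. 0)] w)"
    using cg_ad2[of "Eu t a" n "Eu a c" "Eu b d"] assms g by (simp add: mbr_Eu1 mbr_Eu0)
  have 2: "cg n (ad (Eu t a) (dl [Eu b c, Eu a d])) (\<lambda>w. dl [(\<lambda>i j. 0), Eu a d] w + dl [Eu b c, Eu t d] w)"
    using cg_ad2[of "Eu t a" n "Eu b c" "Eu a d"] assms g by (simp add: mbr_Eu1 mbr_Eu0)
  have 3: "cg n (\<lambda>w. (dl [Eu t c, Eu b d] w + dl [Eu a c, (\<lambda>i j. 0)] w) - (dl [(\<lambda>i j. 0), Eu a d] w + dl [Eu b c, Eu t d] w))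
       (\<lambda>w. (dl [Eu t c, Eu b d] w + 0) - (0 + dl [Eu b c, Eu t d] w))"
    by (intro cg_diff cg_add cg_refl cg_zero1 cg_zero2) (use assms g in auto)
  show ?thesis unfolding Mn_def ad_diff
    by (rule cg_trans[OF cg_diff[OF 1 2] cg_eq[OF 3]]) simp
qed

lemma move_col:
  assumes "distinct [a,b,c,d,t]" "a \<in> {1..n}" "b \<in> {1..n}" "c \<in> {1..n}" "d \<in> {1..n}" "t \<in> {1..n}"
  shows "cg n (ad (Eu c t) (Mn a b c d)) (\<lambda>w. - Mn a b t d w)"
proof -
  have ne[simp]: "a \<noteq> b" "a \<noteq> c" "a \<noteq> d" "a \<noteq> t" "b \<noteq> a" "b \<noteq> c" "b \<noteq> d" "b \<noteq> t" "c \<noteq> a" "c \<noteq> b" "c \<noteq> d" "c \<noteq> t" "d \<noteq> a" "d \<noteq> b" "d \<noteq> c" "d \<noteq> t" "t \<noteq> a" "t \<noteq> b" "t \<noteq> c" "t \<noteq> d" using assms(1) by auto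
  have rg[simp]: "a \<in> {1..n}" "b \<in> {1..n}" "c \<in> {1..n}" "d \<in> {1..n}" "t \<in> {1..n}" using assms by auto
  have g[simp]: "Eu a b \<in> g_set n" "Eu a c \<in> g_set n" "Eu a d \<in> g_set n" "Eu a t \<in> g_set n" "Eu b a \<in> g_set n" "Eu b c \<in> g_set n" "Eu b d \<in> g_set n" "Eu b t \<in> g_set n" "Eu c a \<in> g_set n" "Eu c b \<in> g_set n" "Eu c d \<in> g_set n" "Eu c t \<in> g_set n" "Eu d a \<in> g_set n" "Eu d b \<in> g_set n" "Eu d c \<in> g_set n" "Eu d t \<in> g_set n" "Eu t a \<in> g_set n" "Eu t b \<in> g_set n" "Eu t c \<in> g_set n" "Eu t d \<in> g_set n" using assms by (auto intro!: Eu_g)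
  have 1: "cg n (ad (Eu c t) (dl [Eu a c, Eu b d])) (\<lambda>w. dl [msmul (-1) (Eu a t), Eu b d] w + dl [Eu a c, (\<lambda>i j. 0)] w)"
    using cg_ad2[of "Eu c t" n "Eu a c" "Eu b d"] assms g by (simp add: mbr_Eu2 mbr_Eu0)
  have 2: "cg n (ad (Eu c t) (dl [Eu b c, Eu a d])) (\<lambda>w. dl [msmul (-1) (Eu b t), Eu a d] w + dl [Eu b c, (\<lambda>i j. 0)] w)"
    using cg_ad2[of "Eu c t" n "Eu b c" "Eu a d"] assms g by (simp add: mbr_Eu2 mbr_Eu0)
  have 3: "cg n (\<lambda>w. (dl [msmul (-1) (Eu a t), Eu b d] w + dl [Eu a c, (\<lambda>i j. 0)] w) - (dl [msmul (-1) (Eu b t), Eu a d] w + dl [Eu b c, (\<lambda>i j. 0)] w))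
       (\<lambda>w. ((-1) * dl [Eu a t, Eu b d] w + 0) - ((-1) * dl [Eu b t, Eu a d] w + 0))"
    by (intro cg_diff cg_add cg_refl cg_zero1 cg_zero2 cg_sm1) (use assms g in auto)
  show ?thesis unfolding Mn_def ad_diff
    by (rule cg_trans[OF cg_diff[OF 1 2] cg_eq[OF 3]]) (simp add: fun_eq_iff)
qed

lemma Mn_swr: "Mn b a c d = (\<lambda>w. - Mn a b c d w)" by (simp add: Mn_def fun_eq_iff)

lemma Mn_swc:
  assumes "distinct [a,b,c,d]" "a \<in> {1..n}" "b \<in> {1..n}" "c \<in> {1..n}" "d \<in> {1..n}"
  shows "cg n (Mn a b d c) (\<lambda>w. - Mn a b c d w)"
proof -
  have ne[simp]: "a \<noteq> b" "a \<noteq> c" "a \<noteq> d" "b \<noteq> a" "b \<noteq> c" "b \<noteq> d" "c \<noteq> a" "c \<noteq> b" "c \<noteq> d" "d \<noteq> a" "d \<noteq> b" "d \<noteq> c" using assms(1) by auto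
  have rg[simp]: "a \<in> {1..n}" "b \<in> {1..n}" "c \<in> {1..n}" "d \<in> {1..n}" using assms by auto
  have rg2[simp]: "Suc 0 \<le> a" "a \<le> n" "Suc 0 \<le> b" "b \<le> n" "Suc 0 \<le> c" "c \<le> n" "Suc 0 \<le> d" "d \<le> n" using assms by auto
  have g[simp]: "Eu a b \<in> g_set n" "Eu a c \<in> g_set n" "Eu a d \<in> g_set n" "Eu b a \<in> g_set n" "Eu b c \<in> g_set n" "Eu b d \<in> g_set n" "Eu c a \<in> g_set n" "Eu c b \<in> g_set n" "Eu c d \<in> g_set n" "Eu d a \<in> g_set n" "Eu d b \<in> g_set n" "Eu d c \<in> g_set n" using assms by (auto intro!: Eu_g)
  have 1: "cg n (dl [Eu a d, Eu b c]) (\<lambda>w. dl [Eu b c, Eu a d] w + dl [(\<lambda>i j. 0)] w)"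
    using cg_comm2[of "Eu a d" n "Eu b c"] assms g by (simp add: mbr_Eu0)
  have 2: "cg n (dl [Eu b d, Eu a c]) (\<lambda>w. dl [Eu a c, Eu b d] w + dl [(\<lambda>i j. 0)] w)"
    using cg_comm2[of "Eu b d" n "Eu a c"] assms g by (simp add: mbr_Eu0)
  have 3: "cg n (\<lambda>w. (dl [Eu b c, Eu a d] w + dl [(\<lambda>i j. 0)] w) - (dl [Eu a c, Eu b d] w + dl [(\<lambda>i j. 0)] w))
      (\<lambda>w. (dl [Eu b c, Eu a d] w + 0) - (dl [Eu a c, Eu b d] w + 0))"
    by (intro cg_diff cg_add cg_refl cg_zero0)
  show ?thesis unfolding Mn_def
    by (rule cg_trans[OF cg_diff[OF 1 2] cg_eq[OF 3]]) (simp add: fun_eq_iff)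
qed


definition RM :: "nat \<Rightarrow> nat \<Rightarrow> nat \<Rightarrow> nat \<Rightarrow> nat \<Rightarrow> bool" where
  "RM l a b c d \<longleftrightarrow> Mn a b c d \<in> Rt l \<and> distinct [a,b,c,d] \<and> {a,b,c,d} \<subseteq> {1..Suc l}"

lemma rm_row: assumes "RM l a b c d" "t \<in> {1..Suc l}" "t \<notin> {b,c,d}" shows "RM l t b c d"
proof (cases "t = a")
  case True then show ?thesis using assms by simp
next
  case False
  have d: "distinct [a,b,c,d,t]" using assms False by (auto simp: RM_def)
  have r: "a \<in> {1..Suc l}" "b \<in> {1..Suc l}" "c \<in> {1..Suc l}" "d \<in> {1..Suc l}" using assms by (auto simp: RM_def)
  have "ad (Eu t a) (Mn a b c d) \<in> Rt l"
    using assms False r by (intro Rt.adj Eu_g) (auto simp: RM_def)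
  moreover have "cg (Suc l) (Mn t b c d) (ad (Eu t a) (Mn a b c d))"
    by (rule cg_sym, rule move_row[OF d r assms(2)])
  ultimately have "Mn t b c d \<in> Rt l" by (rule Rt_cg)
  then show ?thesis using assms d by (auto simp: RM_def)
qed

lemma rm_col: assumes "RM l a b c d" "t \<in> {1..Suc l}" "t \<notin> {a,b,d}" shows "RM l a b t d"
proof (cases "t = c")
  case True then show ?thesis using assms by simp
next
  case False
  have d: "distinct [a,b,c,d,t]" using assms False by (auto simp: RM_def)
  have r: "a \<in> {1..Suc l}" "b \<in> {1..Suc l}" "c \<in> {1..Suc l}" "d \<in> {1..Suc l}" using assms by (auto simp: RM_def)
  have "ad (Eu c t) (Mn a b c d) \<in> Rt l"
    using assms False r by (intro Rt.adj Eu_g) (auto simp: RM_def)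
  moreover have "cg (Suc l) (\<lambda>w. - Mn a b t d w) (ad (Eu c t) (Mn a b c d))"
    by (rule cg_sym, rule move_col[OF d r assms(2)])
  ultimately have "(\<lambda>w. - Mn a b t d w) \<in> Rt l" by (rule Rt_cg)
  then have "(\<lambda>w. - (- Mn a b t d w)) \<in> Rt l" by (rule Rt_neg)
  then show ?thesis using assms d by (auto simp: RM_def)
qed

lemma rm_swr: assumes "RM l a b c d" shows "RM l b a c d"
  using assms Rt_neg[of "Mn a b c d" l] Mn_swr[of b a c d] by (auto simp: RM_def)

lemma rm_swc: assumes "RM l a b c d" shows "RM l a b d c"
proof -
  have d: "distinct [a,b,c,d]" and r: "a \<in> {1..Suc l}" "b \<in> {1..Suc l}" "c \<in> {1..Suc l}" "d \<in> {1..Suc l}"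
    using assms by (auto simp: RM_def)
  have "(\<lambda>w. - Mn a b c d w) \<in> Rt l" using assms by (intro Rt_neg) (simp add: RM_def)
  from Rt_cg[OF this Mn_swc[OF d r]] show ?thesis using assms by (auto simp: RM_def)
qed

lemma rm_row2: assumes "RM l a b c d" "t \<in> {1..Suc l}" "t \<notin> {a,c,d}" shows "RM l a t c d"
  using rm_swr[OF rm_row[OF rm_swr[OF assms(1)] assms(2)]] assms(3) by auto

lemma rm_col2: assumes "RM l a b c d" "t \<in> {1..Suc l}" "t \<notin> {a,b,c}" shows "RM l a b c t"
  using rm_swc[OF rm_col[OF rm_swc[OF assms(1)] assms(2)]] assms(3) by auto

lemma free_idx: assumes "4 \<le> l" shows "\<exists>f\<in>{1..Suc l}. f \<notin> {a,b,c,d}"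
proof (rule ccontr)
  assume "\<not> ?thesis"
  then have "{1..Suc l} \<subseteq> {a,b,c,d}" by auto
  then have "card {1..Suc l} \<le> card {a,b,c,d}" by (intro card_mono) auto
  also have "card {a,b,c,d} \<le> 4" by (simp add: card_insert_if)
  finally show False using assms by simp
qed

lemma rm_fix4: assumes "RM l a b c d" "d' \<in> {1..Suc l}" "d' \<notin> {a,b,c}" shows "RM l a b c d'"
  by (rule rm_col2[OF assms])

lemma rm_fix3: assumes "4 \<le> l" "RM l a b c d" "c' \<in> {1..Suc l}" "c' \<notin> {a,b}" shows "\<exists>d1. RM l a b c' d1"
proof (cases "c' = d")
  case True
  obtain f where f: "f \<in> {1..Suc l}" "f \<notin> {a,b,c,d}" using free_idx[OF assms(1)] by blast
  have "RM l a b c f" using rm_col2[OF assms(2) f(1)] f(2) by auto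
  then have "RM l a b c' f" using rm_col[OF _ assms(3)] True f assms(4) by auto
  then show ?thesis by blast
next
  case False
  then show ?thesis using rm_col[OF assms(2) assms(3)] assms(4) by auto
qed

lemma rm_fix2: assumes "4 \<le> l" "RM l a b c d" "b' \<in> {1..Suc l}" "b' \<noteq> a" shows "\<exists>c1 d1. RM l a b' c1 d1"
proof -
  obtain f where f: "f \<in> {1..Suc l}" "f \<notin> {a,b,c,d}" using free_idx[OF assms(1)] by blast
  have dd: "distinct [a,b,c,d]" using assms(2) by (simp add: RM_def)
  consider "b' = c" | "b' = d" | "b' \<notin> {a,c,d}" using assms(4) by auto
  then show ?thesis
  proof cases
    case 1
    have "RM l a b f d" using rm_col[OF assms(2) f(1)] f(2) by auto
    then have "RM l a b' f d" using rm_row2[OF _ assms(3)] 1 f dd by auto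
    then show ?thesis by blast
  next
    case 2
    have "RM l a b c f" using rm_col2[OF assms(2) f(1)] f(2) by auto
    then have "RM l a b' c f" using rm_row2[OF _ assms(3)] 2 f dd by auto
    then show ?thesis by blast
  next
    case 3
    then show ?thesis using rm_row2[OF assms(2) assms(3)] by blast
  qed
qed

lemma rm_fix1: assumes "4 \<le> l" "RM l a b c d" "a' \<in> {1..Suc l}" shows "\<exists>b1 c1 d1. RM l a' b1 c1 d1"
proof -
  obtain f where f: "f \<in> {1..Suc l}" "f \<notin> {a,b,c,d}" using free_idx[OF assms(1)] by blast
  have dd: "distinct [a,b,c,d]" using assms(2) by (simp add: RM_def)
  consider "a' = a" | "a' = b" | "a' = c" | "a' = d" | "a' \<notin> {b,c,d}" by auto
  then show ?thesis
  proof cases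
    case 1 then show ?thesis using assms(2) by blast
  next
    case 2
    have "RM l a f c d" using rm_row2[OF assms(2) f(1)] f(2) by auto
    then have "RM l a' f c d" using rm_row[OF _ assms(3)] 2 f dd by auto
    then show ?thesis by blast
  next
    case 3
    have "RM l a b f d" using rm_col[OF assms(2) f(1)] f(2) by auto
    then have "RM l a' b f d" using rm_row[OF _ assms(3)] 3 f dd by auto
    then show ?thesis by blast
  next
    case 4
    have "RM l a b c f" using rm_col2[OF assms(2) f(1)] f(2) by auto
    then have "RM l a' b c f" using rm_row[OF _ assms(3)] 4 f dd by auto
    then show ?thesis by blast
  next
    case 5
    then show ?thesis using rm_row[OF assms(2) assms(3)] by blast
  qed
qed

lemma rm_all:
  assumes "4 \<le> l" "RM l a b c d" "distinct [a',b',c',d']" "{a',b',c',d'} \<subseteq> {1..Suc l}"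
  shows "RM l a' b' c' d'"
proof -
  have "a' \<in> {1..Suc l}" using assms(4) by auto
  then obtain b1 c1 d1 where 1: "RM l a' b1 c1 d1" using rm_fix1[OF assms(1,2)] by blast
  have "b' \<in> {1..Suc l}" "b' \<noteq> a'" using assms(3,4) by auto
  then obtain c2 d2 where 2: "RM l a' b' c2 d2" using rm_fix2[OF assms(1) 1] by blast
  have "c' \<in> {1..Suc l}" "c' \<notin> {a',b'}" using assms(3,4) by auto
  then obtain d3 where 3: "RM l a' b' c' d3" using rm_fix3[OF assms(1) 2] by blast
  show ?thesis using rm_fix4[OF 3] assms(3,4) by auto
qed


lemma cg_sm12: "X \<in> g_set n \<Longrightarrow> Y \<in> g_set n \<Longrightarrow> cg n (dl [msmul c1 X, msmul c2 Y]) (\<lambda>w. (c1 * c2) * dl [X, Y] w)"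
proof -
  assume X: "X \<in> g_set n" and Y: "Y \<in> g_set n"
  have mY: "msmul c2 Y \<in> g_set n" using Y by (auto simp: g_set_def msmul_def sum_distrib_left[symmetric])
  have "cg n (dl [msmul c1 X, msmul c2 Y]) (\<lambda>w. c1 * dl [X, msmul c2 Y] w)" by (rule cg_sm1[OF mY X])
  moreover have "cg n (\<lambda>w. c1 * dl [X, msmul c2 Y] w) (\<lambda>w. c1 * (c2 * dl [X, Y] w))"
    by (rule cg_smul, rule cg_sm2[OF X Y])
  ultimately show ?thesis by (rule cg_trans[OF _ cg_eq]) (simp add: algebra_simps)
qed

lemma vprime_Mn: assumes "3 \<le> l" shows "cg (Suc l) (vprime l) (Mn 1 2 (Suc l) l)"
proof -
  define k where "k = l - 3"
  have k: "l = Suc (Suc (Suc k))" using assms by (simp add: k_def)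
  have sg1: "(-1::complex)^(l + 1 - 1 - 1) * (-1)^(l - 2 - 1) = 1"
    unfolding k by (simp add: power_mult_distrib[symmetric])
  have sg2: "(-1::complex)^(l + 1 - 2 - 1) * (-1)^(l - 1 - 1) = 1"
    unfolding k by (simp add: power_mult_distrib[symmetric])
  have g: "Eu 1 (Suc l) \<in> g_set (Suc l)" "Eu 2 l \<in> g_set (Suc l)" "Eu 2 (Suc l) \<in> g_set (Suc l)" "Eu 1 l \<in> g_set (Suc l)"
    using assms by (auto intro!: Eu_g)
  have "cg (Suc l) (vprime l) (\<lambda>w. ((-1)^(l + 1 - 1 - 1) * (-1)^(l - 2 - 1)) * dl [Eu 1 (Suc l), Eu 2 l] w
                              - ((-1)^(l + 1 - 2 - 1) * (-1)^(l - 1 - 1)) * dl [Eu 2 (Suc l), Eu 1 l] w)"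
    unfolding vprime_dl eroot_def Suc_eq_plus1[symmetric]
    by (intro cg_diff cg_sm12 g)
  then show ?thesis unfolding sg1 sg2 by (simp add: Mn_def)
qed

lemma RM_start: assumes "3 \<le> l" shows "RM l 1 2 (Suc l) l"
proof -
  have "Mn 1 2 (Suc l) l \<in> Rt l" by (rule Rt_cg[OF Rt.gen cg_sym[OF vprime_Mn[OF assms]]])
  then show ?thesis using assms by (auto simp: RM_def)
qed

lemma mbr_Eu_Dg: assumes "d \<notin> {c,a}" "b \<notin> {c,a}" "b \<in> {1..n}" "d \<in> {1..n}"
  shows "mbr n (Eu d b) (Dg c a) = (\<lambda>i j. 0)"
proof (intro ext)
  fix i j
  have 1: "mmul n (Eu d b) (Dg c a) i j = 0"
    unfolding mmul_def using assms by (intro sum.neutral) (auto simp: Eu_def Dg_def)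
  have 2: "mmul n (Dg c a) (Eu d b) i j = 0"
    unfolding mmul_def using assms by (intro sum.neutral) (auto simp: Eu_def Dg_def)
  show "mbr n (Eu d b) (Dg c a) i j = 0" by (simp add: mbr_def 1 2)
qed

definition Ez :: "nat \<Rightarrow> nat \<Rightarrow> nat \<Rightarrow> nat \<Rightarrow> fa" where
  "Ez a b c d = (\<lambda>w. dl [Dg c a, Dg d b] w + dl [Eu d a, Eu a d] w - dl [Eu b a, Eu a b] w
                   - dl [Eu d c, Eu c d] w + dl [Eu b c, Eu c b] w)"

lemma zw_cg:
  assumes "distinct [a,b,c,d]" "a \<in> {1..n}" "b \<in> {1..n}" "c \<in> {1..n}" "d \<in> {1..n}"
  shows "cg n (ad (Eu d b) (ad (Eu c a) (Mn a b c d))) (Ez a b c d)"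
proof -
  have ne[simp]: "a \<noteq> b" "a \<noteq> c" "a \<noteq> d" "b \<noteq> a" "b \<noteq> c" "b \<noteq> d" "c \<noteq> a" "c \<noteq> b" "c \<noteq> d" "d \<noteq> a" "d \<noteq> b" "d \<noteq> c"
    using assms(1) by auto
  have rg[simp]: "a \<in> {1..n}" "b \<in> {1..n}" "c \<in> {1..n}" "d \<in> {1..n}" using assms by auto
  have rg2[simp]: "Suc 0 \<le> a" "a \<le> n" "Suc 0 \<le> b" "b \<le> n" "Suc 0 \<le> c" "c \<le> n" "Suc 0 \<le> d" "d \<le> n" using assms by auto
  have g[simp]: "Eu a b \<in> g_set n" "Eu a c \<in> g_set n" "Eu a d \<in> g_set n" "Eu b a \<in> g_set n" "Eu b c \<in> g_set n" "Eu b d \<in> g_set n"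
     "Eu c a \<in> g_set n" "Eu c b \<in> g_set n" "Eu c d \<in> g_set n" "Eu d a \<in> g_set n" "Eu d b \<in> g_set n" "Eu d c \<in> g_set n"
    using assms by (auto intro!: Eu_g)
  have gD[simp]: "Dg c a \<in> g_set n" "Dg d b \<in> g_set n" using assms by (auto intro!: h_g Dg_h)
  define M1 where "M1 = (\<lambda>w. dl [Dg c a, Eu b d] w + dl [Eu b a, Eu a d] w - dl [Eu b c, Eu c d] w)"
  have s1: "cg n (ad (Eu c a) (Mn a b c d)) M1"
  proof -
    have 1: "cg n (ad (Eu c a) (dl [Eu a c, Eu b d])) (\<lambda>w. dl [Dg c a, Eu b d] w + dl [Eu a c, (\<lambda>i j. 0)] w)"
      using cg_ad2[of "Eu c a" n "Eu a c" "Eu b d"] mbr_Eu3[of a n c] by (simp add: mbr_Eu0)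
    have 2: "cg n (ad (Eu c a) (dl [Eu b c, Eu a d])) (\<lambda>w. dl [msmul (-1) (Eu b a), Eu a d] w + dl [Eu b c, Eu c d] w)"
      using cg_ad2[of "Eu c a" n "Eu b c" "Eu a d"] by (simp add: mbr_Eu2 mbr_Eu1)
    have 3: "cg n (\<lambda>w. (dl [Dg c a, Eu b d] w + dl [Eu a c, (\<lambda>i j. 0)] w) - (dl [msmul (-1) (Eu b a), Eu a d] w + dl [Eu b c, Eu c d] w))
        (\<lambda>w. (dl [Dg c a, Eu b d] w + 0) - ((-1) * dl [Eu b a, Eu a d] w + dl [Eu b c, Eu c d] w))"
      by (intro cg_diff cg_add cg_refl cg_zero2 cg_sm1) simp_all
    show ?thesis unfolding Mn_def ad_diff
      by (rule cg_trans[OF cg_diff[OF 1 2] cg_eq[OF 3]]) (simp add: M1_def fun_eq_iff)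
  qed
  have s2: "cg n (ad (Eu d b) M1) (Ez a b c d)"
  proof -
    have 1: "cg n (ad (Eu d b) (dl [Dg c a, Eu b d])) (\<lambda>w. dl [(\<lambda>i j. 0), Eu b d] w + dl [Dg c a, Dg d b] w)"
      using cg_ad2[of "Eu d b" n "Dg c a" "Eu b d"] mbr_Eu3[of b n d] by (simp add: mbr_Eu_Dg)
    have 2: "cg n (ad (Eu d b) (dl [Eu b a, Eu a d])) (\<lambda>w. dl [Eu d a, Eu a d] w + dl [Eu b a, msmul (-1) (Eu a b)] w)"
      using cg_ad2[of "Eu d b" n "Eu b a" "Eu a d"] by (simp add: mbr_Eu1 mbr_Eu2)
    have 3: "cg n (ad (Eu d b) (dl [Eu b c, Eu c d])) (\<lambda>w. dl [Eu d c, Eu c d] w + dl [Eu b c, msmul (-1) (Eu c b)] w)"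
      using cg_ad2[of "Eu d b" n "Eu b c" "Eu c d"] by (simp add: mbr_Eu1 mbr_Eu2)
    have 4: "cg n (\<lambda>w. (dl [(\<lambda>i j. 0), Eu b d] w + dl [Dg c a, Dg d b] w) + (dl [Eu d a, Eu a d] w + dl [Eu b a, msmul (-1) (Eu a b)] w)
                     - (dl [Eu d c, Eu c d] w + dl [Eu b c, msmul (-1) (Eu c b)] w))
        (\<lambda>w. (0 + dl [Dg c a, Dg d b] w) + (dl [Eu d a, Eu a d] w + (-1) * dl [Eu b a, Eu a b] w)
                     - (dl [Eu d c, Eu c d] w + (-1) * dl [Eu b c, Eu c b] w))"
      by (intro cg_diff cg_add cg_refl cg_zero1 cg_sm2) simp_all
    show ?thesis unfolding M1_def ad_diff ad_add
      by (rule cg_trans[OF cg_diff[OF cg_add[OF 1 2] 3] cg_eq[OF 4]]) (simp add: Ez_def fun_eq_iff)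
  qed
  show ?thesis by (rule cg_trans[OF cg_ad[OF g(11) s1] s2])
qed


lemma Jn_add': "a \<in> Jn n \<Longrightarrow> b \<in> Jn n \<Longrightarrow> (\<lambda>w. a w + b w) \<in> Jn n"
  using Jn.add[of a n b] by (simp add: fa_add_def)
lemma Jn_smul': "a \<in> Jn n \<Longrightarrow> (\<lambda>w. c * a w) \<in> Jn n"
  using Jn.smul[of a n c] by (simp add: fa_smul_def)
lemma Jn_diff': "a \<in> Jn n \<Longrightarrow> b \<in> Jn n \<Longrightarrow> (\<lambda>w. a w - b w) \<in> Jn n"
  using Jn_add'[OF _ Jn_smul'[of b n "-1"], of a] by simp

lemma np_Eu: "x < y \<Longrightarrow> x \<in> {1..n} \<Longrightarrow> y \<in> {1..n} \<Longrightarrow> Eu x y \<in> np_set n"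
  using Eu_g[of x y n] by (auto simp: np_set_def Eu_def split: if_splits)

lemma pair_Jn:
  assumes "x \<noteq> y" "x \<in> {1..n}" "y \<in> {1..n}"
  shows "(\<lambda>w. dl [Eu x y, Eu y x] w - (if x < y then dl [Dg x y] w else 0)) \<in> Jn n"
proof (cases "x < y")
  case True
  have i: "(\<lambda>w. dl ([] @ [Eu x y, Eu y x] @ []) w - dl ([] @ [Eu y x, Eu x y] @ []) w - dl ([] @ [mbr n (Eu x y) (Eu y x)] @ []) w) \<in> Iid n"
    by (rule comm_ctx) (use assms in \<open>auto intro!: Eu_g\<close>)
  have j: "fa_mul (dl [Eu y x]) (ltr (Eu x y)) \<in> Jn n"
    by (rule Jn.gen) (use assms True in \<open>auto intro!: dl_FA Eu_g np_Eu\<close>)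
  have "(\<lambda>w. (dl [Eu x y, Eu y x] w - dl [Eu y x, Eu x y] w - dl [Dg x y] w) + dl [Eu y x, Eu x y] w) \<in> Jn n"
    using Jn_add'[OF Jn.ideal[OF i] j] assms by (simp add: ltr_dl fa_mul_dl mbr_Eu3)
  then show ?thesis using True by simp
next
  case False
  then have yx: "y < x" using assms by simp
  have j: "fa_mul (dl [Eu x y]) (ltr (Eu y x)) \<in> Jn n"
    by (rule Jn.gen) (use assms yx in \<open>auto intro!: dl_FA Eu_g np_Eu\<close>)
  then show ?thesis using False by (simp add: ltr_dl fa_mul_dl)
qed

definition pz :: "nat \<Rightarrow> nat \<Rightarrow> nat \<Rightarrow> nat \<Rightarrow> fa" where
  "pz a b c d = (\<lambda>w. dl [Dg c a, Dg d b] w + (if d < a then dl [Dg d a] w else 0) - (if b < a then dl [Dg b a] w else 0)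
                   - (if d < c then dl [Dg d c] w else 0) + (if b < c then dl [Dg b c] w else 0))"

lemma Ez_pz:
  assumes "distinct [a,b,c,d]" "a \<in> {1..n}" "b \<in> {1..n}" "c \<in> {1..n}" "d \<in> {1..n}"
  shows "(\<lambda>w. Ez a b c d w - pz a b c d w) \<in> Jn n"
proof -
  have 1: "(\<lambda>w. dl [Eu d a, Eu a d] w - (if d < a then dl [Dg d a] w else 0)) \<in> Jn n" using assms by (intro pair_Jn) auto
  have 2: "(\<lambda>w. dl [Eu b a, Eu a b] w - (if b < a then dl [Dg b a] w else 0)) \<in> Jn n" using assms by (intro pair_Jn) auto
  have 3: "(\<lambda>w. dl [Eu d c, Eu c d] w - (if d < c then dl [Dg d c] w else 0)) \<in> Jn n" using assms by (intro pair_Jn) auto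
  have 4: "(\<lambda>w. dl [Eu b c, Eu c b] w - (if b < c then dl [Dg b c] w else 0)) \<in> Jn n" using assms by (intro pair_Jn) auto
  have "(\<lambda>w. (dl [Eu d a, Eu a d] w - (if d < a then dl [Dg d a] w else 0)) - (dl [Eu b a, Eu a b] w - (if b < a then dl [Dg b a] w else 0))
     - (dl [Eu d c, Eu c d] w - (if d < c then dl [Dg d c] w else 0)) + (dl [Eu b c, Eu c b] w - (if b < c then dl [Dg b c] w else 0))) \<in> Jn n"
    by (intro Jn_add' Jn_diff' 1 2 3 4)
  moreover have "(\<lambda>w. Ez a b c d w - pz a b c d w) = (\<lambda>w. (dl [Eu d a, Eu a d] w - (if d < a then dl [Dg d a] w else 0)) - (dl [Eu b a, Eu a b] w - (if b < a then dl [Dg b a] w else 0))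
     - (dl [Eu d c, Eu c d] w - (if d < c then dl [Dg d c] w else 0)) + (dl [Eu b c, Eu c b] w - (if b < c then dl [Dg b c] w else 0)))"
    by (simp add: Ez_def pz_def fun_eq_iff algebra_simps)
  ultimately show ?thesis by simp
qed

lemma pz_Sh:
  assumes "distinct [a,b,c,d]" "a \<in> {1..n}" "b \<in> {1..n}" "c \<in> {1..n}" "d \<in> {1..n}"
  shows "pz a b c d \<in> Sh n"
proof -
  let ?W = "{[Dg c a, Dg d b], [Dg d a], [Dg b a], [Dg d c], [Dg b c]}"
  have sub: "{w. pz a b c d w \<noteq> 0} \<subseteq> ?W"
    by (auto simp: pz_def dl_def split: if_splits)
  have h: "\<And>w. w \<in> ?W \<Longrightarrow> set w \<subseteq> h_set n"
    using assms by (auto intro!: Dg_h)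
  have "finite {w. pz a b c d w \<noteq> 0}" by (rule finite_subset[OF sub]) simp
  moreover have "\<And>w. pz a b c d w \<noteq> 0 \<Longrightarrow> set w \<subseteq> h_set n" using sub h by blast
  ultimately show ?thesis by (auto simp: Sh_def FA_def dest: h_g)
qed


lemma adH_pair:
  assumes H: "H \<in> h_set n" and "x \<noteq> y" "x \<in> {1..n}" "y \<in> {1..n}"
  shows "cg n (ad H (dl [Eu x y, Eu y x])) (\<lambda>w. 0)"
proof -
  have Hd: "\<And>i j. i \<noteq> j \<Longrightarrow> H i j = 0" using H by (simp add: h_diag)
  have g: "Eu x y \<in> g_set n" "Eu y x \<in> g_set n" using assms by (auto intro!: Eu_g)
  have 1: "cg n (ad H (dl [Eu x y, Eu y x])) (\<lambda>w. dl [msmul (H x x - H y y) (Eu x y), Eu y x] w + dl [Eu x y, msmul (H y y - H x x) (Eu y x)] w)"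
    using cg_ad2[OF h_g[OF H] g] assms by (simp add: mbr_H_Eu[OF Hd])
  have 2: "cg n (\<lambda>w. dl [msmul (H x x - H y y) (Eu x y), Eu y x] w + dl [Eu x y, msmul (H y y - H x x) (Eu y x)] w)
     (\<lambda>w. (H x x - H y y) * dl [Eu x y, Eu y x] w + (H y y - H x x) * dl [Eu x y, Eu y x] w)"
    by (intro cg_add cg_sm1 cg_sm2 g)
  show ?thesis by (rule cg_trans[OF 1 cg_eq[OF 2]]) (simp add: fun_eq_iff algebra_simps)
qed

lemma adH_DD:
  assumes H: "H \<in> h_set n" and D1: "D1 \<in> h_set n" and D2: "D2 \<in> h_set n"
  shows "cg n (ad H (dl [D1, D2])) (\<lambda>w. 0)"
proof -
  have Hd: "\<And>i j. i \<noteq> j \<Longrightarrow> H i j = 0" using H by (simp add: h_diag)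
  have 1: "cg n (ad H (dl [D1, D2])) (\<lambda>w. dl [(\<lambda>i j. 0), D2] w + dl [D1, (\<lambda>i j. 0)] w)"
    using cg_ad2[OF h_g[OF H] h_g[OF D1] h_g[OF D2]]
    by (simp add: diag_mbr[OF Hd h_diag[OF D1]] diag_mbr[OF Hd h_diag[OF D2]])
  have 2: "cg n (\<lambda>w. dl [(\<lambda>i j. 0), D2] w + dl [D1, (\<lambda>i j. 0)] w) (\<lambda>w. 0 + 0)"
    by (intro cg_add cg_zero1 cg_zero2 h_g D1 D2)
  show ?thesis using cg_trans[OF 1 2] by simp
qed

lemma adH_Ez:
  assumes H: "H \<in> h_set n" and "distinct [a,b,c,d]" "a \<in> {1..n}" "b \<in> {1..n}" "c \<in> {1..n}" "d \<in> {1..n}"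
  shows "cg n (ad H (Ez a b c d)) (\<lambda>w. 0)"
proof -
  have "cg n (ad H (Ez a b c d)) (\<lambda>w. 0 + 0 - 0 - 0 + 0)"
    unfolding Ez_def ad_add ad_diff
    by (intro cg_add cg_diff adH_DD adH_pair H Dg_h) (use assms in auto)
  then show ?thesis by simp
qed

definition zr :: "nat \<Rightarrow> nat \<Rightarrow> nat \<Rightarrow> nat \<Rightarrow> fa" where
  "zr a b c d = ad (Eu d b) (ad (Eu c a) (Mn a b c d))"

lemma zr_R0: assumes "RM l a b c d" shows "zr a b c d \<in> R0 l"
proof -
  have d: "distinct [a,b,c,d]" and r: "a \<in> {1..Suc l}" "b \<in> {1..Suc l}" "c \<in> {1..Suc l}" "d \<in> {1..Suc l}"
    and M: "Mn a b c d \<in> Rt l" using assms by (auto simp: RM_def)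
  have "zr a b c d \<in> Rt l" unfolding zr_def
    using d r by (intro Rt.adj Eu_g M) auto
  moreover have "ad H (zr a b c d) \<in> Iid (Suc l)" if H: "H \<in> h_set (Suc l)" for H
  proof -
    have "cg (Suc l) (ad H (zr a b c d)) (ad H (Ez a b c d))"
      unfolding zr_def by (rule cg_ad[OF h_g[OF H] zw_cg[OF d r]])
    from cg_trans[OF this adH_Ez[OF H d r]] show ?thesis by (simp add: cg_def)
  qed
  ultimately show ?thesis by (simp add: R0_def)
qed

lemma zr_Jn: assumes "RM l a b c d" shows "fa_diff (zr a b c d) (pz a b c d) \<in> Jn (Suc l)"
proof -
  have d: "distinct [a,b,c,d]" and r: "a \<in> {1..Suc l}" "b \<in> {1..Suc l}" "c \<in> {1..Suc l}" "d \<in> {1..Suc l}"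
    using assms by (auto simp: RM_def)
  have 1: "(\<lambda>w. zr a b c d w - Ez a b c d w) \<in> Jn (Suc l)"
    using zw_cg[OF d r] by (intro Jn.ideal) (simp add: cg_def zr_def)
  have "(\<lambda>w. (zr a b c d w - Ez a b c d w) + (Ez a b c d w - pz a b c d w)) \<in> Jn (Suc l)"
    by (rule Jn_add'[OF 1 Ez_pz[OF d r]])
  then show ?thesis by (simp add: fa_diff_def)
qed


definition Quad :: "nat \<Rightarrow> ((nat \<Rightarrow> complex) \<Rightarrow> complex) \<Rightarrow> bool" where
  "Quad l F \<longleftrightarrow> (\<exists>c b a. \<forall>x. F x = c + (\<Sum>k=1..l. b k * x k) + (\<Sum>j=1..l. \<Sum>k=1..l. a j k * x j * x k))"

lemma Quad_const: "Quad l (\<lambda>x. c)"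
  unfolding Quad_def by (rule exI[of _ c], rule exI[of _ "\<lambda>k. 0"], rule exI[of _ "\<lambda>j k. 0"]) simp

lemma Quad_add: "Quad l F \<Longrightarrow> Quad l G \<Longrightarrow> Quad l (\<lambda>x. F x + G x)"
proof -
  assume "Quad l F" "Quad l G"
  then obtain c b a c' b' a' where
    F: "\<forall>x. F x = c + (\<Sum>k=1..l. b k * x k) + (\<Sum>j=1..l. \<Sum>k=1..l. a j k * x j * x k)" and
    G: "\<forall>x. G x = c' + (\<Sum>k=1..l. b' k * x k) + (\<Sum>j=1..l. \<Sum>k=1..l. a' j k * x j * x k)"
    unfolding Quad_def by blast
  show ?thesis unfolding Quad_def
    by (rule exI[of _ "c + c'"], rule exI[of _ "\<lambda>k. b k + b' k"], rule exI[of _ "\<lambda>j k. a j k + a' j k"])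
       (simp add: F G sum.distrib algebra_simps)
qed

lemma Quad_smul: "Quad l F \<Longrightarrow> Quad l (\<lambda>x. d * F x)"
proof -
  assume "Quad l F"
  then obtain c b a where
    F: "\<forall>x. F x = c + (\<Sum>k=1..l. b k * x k) + (\<Sum>j=1..l. \<Sum>k=1..l. a j k * x j * x k)"
    unfolding Quad_def by blast
  show ?thesis unfolding Quad_def
    by (rule exI[of _ "d * c"], rule exI[of _ "\<lambda>k. d * b k"], rule exI[of _ "\<lambda>j k. d * a j k"])
       (simp add: F sum_distrib_left algebra_simps)
qed

lemma Quad_sum: "Quad l (\<lambda>x. 0) \<Longrightarrow> (\<And>i. i \<in> I \<Longrightarrow> Quad l (F i)) \<Longrightarrow> Quad l (\<lambda>x. \<Sum>i\<in>I. F i x)"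
proof (induction I rule: infinite_finite_induct)
  case (infinite A) then show ?case by simp
next
  case empty then show ?case by simp
next
  case (insert i I) then show ?case by (simp add: Quad_add)
qed

lemma Quad_linform: "Quad l (\<lambda>x. \<Sum>k=1..l. b k * x k)"
  unfolding Quad_def by (rule exI[of _ 0], rule exI[of _ b], rule exI[of _ "\<lambda>j k. 0"]) simp

lemma Quad_prod: "Quad l (\<lambda>x. (\<Sum>k=1..l. b k * x k) * (\<Sum>k=1..l. b' k * x k))"
  unfolding Quad_def
  by (rule exI[of _ 0], rule exI[of _ "\<lambda>k. 0"], rule exI[of _ "\<lambda>j k. b j * b' k"])
     (simp only: sum_product, simp add: mult_ac)

lemma Quad_hval: "Quad l (\<lambda>x. hval l x X)"
  unfolding hval_def by (rule Quad_linform)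

lemma Quad_hval2: "Quad l (\<lambda>x. hval l x X * hval l x Y)"
  unfolding hval_def by (rule Quad_prod)


lemma lin_eval:
  fixes p q l :: nat and u v :: complex
  assumes "p \<noteq> q"
  shows "(\<Sum>k=1..l. b k * ((if k = p then u else 0) + (if k = q then v else 0))) =
    (if p \<in> {1..l} then b p * u else 0) + (if q \<in> {1..l} then b q * (v::complex) else 0)"
proof -
  have "(\<Sum>k=1..l. b k * ((if k = p then u else 0) + (if k = q then v else 0))) =
        (\<Sum>k=1..l. (if k = p then b p * u else 0) + (if k = q then b q * v else 0))"
    using assms by (intro sum.cong) auto
  also have "\<dots> = (if p \<in> {1..l} then b p * u else 0) + (if q \<in> {1..l} then b q * v else 0)"
    unfolding sum.distrib by (simp only: sum.delta[OF finite_atLeastAtMost])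
  finally show ?thesis .
qed

lemma quad_eval:
  fixes u v :: complex and p q l :: nat and a :: "nat \<Rightarrow> nat \<Rightarrow> complex"
  assumes "p \<noteq> q"
  defines "y \<equiv> (\<lambda>i. (if i = p then u else 0) + (if i = q then v else (0::complex)))"
  shows "(\<Sum>j=1..l. \<Sum>k=1..l. a j k * y j * y k) =
     (if p \<in> {1..l} then ((if p \<in> {1..l} then a p p * u else 0) + (if q \<in> {1..l} then a p q * v else 0)) * u else 0)
   + (if q \<in> {1..l} then ((if p \<in> {1..l} then a q p * u else 0) + (if q \<in> {1..l} then a q q * v else 0)) * v else 0)"
  (is "_ = ?rhs")
proof -
  have "(\<Sum>j=1..l. \<Sum>k=1..l. a j k * y j * y k) = (\<Sum>j=1..l. (\<Sum>k=1..l. a j k * y k) * y j)"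
    by (simp add: sum_distrib_left sum_distrib_right mult_ac)
  also have "\<dots> = (\<Sum>j=1..l. ((if p \<in> {1..l} then a j p * u else 0) + (if q \<in> {1..l} then a j q * v else 0)) * y j)"
    unfolding y_def using lin_eval[OF assms(1)] by simp
  also have "\<dots> = ?rhs"
    unfolding y_def using lin_eval[OF assms(1), where l=l and b="\<lambda>j. ((if p \<in> {1..l} then a j p * u else 0) + (if q \<in> {1..l} then a j q * v else 0))" and u=u and v=v]
    by (simp add: mult.commute)
  finally show ?thesis .
qed


lemma Ind_sum:
  fixes l :: nat
  shows "(\<Sum>k\<in>Ind l. c k * bfun k h) = (\<Sum>i=1..l-2. \<Sum>j=i+2..l. c (Pidx i j) * (h i * h j))
     + (\<Sum>i=2..l-1. c (Qidx i) * (h i * (h (i - 1) + h i + h (i + 1) + 1)))"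
proof -
  let ?A = "(\<lambda>(i,j). Pidx i j) ` (SIGMA i:{1..l-2}. {i+2..l})"
  let ?B = "Qidx ` {2..l-1}"
  have I: "Ind l = ?A \<union> ?B" unfolding Ind_def by auto
  have d: "?A \<inter> ?B = {}" by auto
  have fA: "finite ?A" and fB: "finite ?B" by auto
  have iA: "inj_on (\<lambda>(i,j). Pidx i j) (SIGMA i:{1..l-2}. {i+2..l})" by (auto simp: inj_on_def)
  have iB: "inj_on Qidx {2..l-1}" by (auto simp: inj_on_def)
  have "(\<Sum>k\<in>Ind l. c k * bfun k h) = (\<Sum>k\<in>?A. c k * bfun k h) + (\<Sum>k\<in>?B. c k * bfun k h)"
    unfolding I by (rule sum.union_disjoint[OF fA fB d])
  also have "(\<Sum>k\<in>?A. c k * bfun k h) = (\<Sum>(i,j)\<in>(SIGMA i:{1..l-2}. {i+2..l}). c (Pidx i j) * (h i * h j))"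
    by (subst sum.reindex[OF iA]) (simp add: case_prod_unfold)
  also have "\<dots> = (\<Sum>i=1..l-2. \<Sum>j=i+2..l. c (Pidx i j) * (h i * h j))"
    by (subst sum.Sigma[symmetric]) auto
  also have "(\<Sum>k\<in>?B. c k * bfun k h) = (\<Sum>i=2..l-1. c (Qidx i) * (h i * (h (i - 1) + h i + h (i + 1) + 1)))"
    by (subst sum.reindex[OF iB]) simp
  finally show ?thesis .
qed

lemma dsplit:
  fixes l :: nat and a :: "nat \<Rightarrow> nat \<Rightarrow> complex"
  shows "(\<Sum>j=1..l. \<Sum>k=1..l. a j k * x j * x k) = (\<Sum>k=1..l. a k k * x k * x k)
     + (\<Sum>j=1..l. \<Sum>k=j+1..l. (a j k + a k j) * x j * x k)"
proof (induction l)
  case 0 then show ?case by simp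
next
  case (Suc l)
  have e1: "(\<Sum>j=1..Suc l. \<Sum>k=1..Suc l. a j k * x j * x k) = (\<Sum>j=1..l. \<Sum>k=1..l. a j k * x j * x k)
     + (\<Sum>j=1..l. a j (Suc l) * x j * x (Suc l)) + (\<Sum>k=1..l. a (Suc l) k * x (Suc l) * x k)
     + a (Suc l) (Suc l) * x (Suc l) * x (Suc l)"
    by (simp add: sum.distrib)
  have e2: "(\<Sum>j=1..Suc l. \<Sum>k=j+1..Suc l. (a j k + a k j) * x j * x k) =
     (\<Sum>j=1..l. \<Sum>k=j+1..l. (a j k + a k j) * x j * x k) + (\<Sum>j=1..l. (a j (Suc l) + a (Suc l) j) * x j * x (Suc l))"
  proof -
    have "(\<Sum>j=1..Suc l. \<Sum>k=j+1..Suc l. (a j k + a k j) * x j * x k) = (\<Sum>j=1..l. \<Sum>k=j+1..Suc l. (a j k + a k j) * x j * x k)"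
      by simp
    also have "\<dots> = (\<Sum>j=1..l. (\<Sum>k=j+1..l. (a j k + a k j) * x j * x k) + (a j (Suc l) + a (Suc l) j) * x j * x (Suc l))"
      by (intro sum.cong refl) simp
    finally show ?thesis by (simp add: sum.distrib)
  qed
  show ?case unfolding e1 e2 Suc.IH
    by (simp add: sum.distrib distrib_right algebra_simps)
qed

lemma split_adj:
  fixes T :: "nat \<Rightarrow> nat \<Rightarrow> complex" and m :: nat
  shows "(\<Sum>j=1..Suc m. \<Sum>k=j+1..Suc m. T j k) = (\<Sum>j=1..m. T j (j+1)) + (\<Sum>j=1..m-1. \<Sum>k=j+2..Suc m. T j k)"
proof -
  have "(\<Sum>j=1..Suc m. \<Sum>k=j+1..Suc m. T j k) = (\<Sum>j=1..m. \<Sum>k=j+1..Suc m. T j k)" by simp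
  also have "\<dots> = (\<Sum>j=1..m. T j (j+1) + (\<Sum>k=j+2..Suc m. T j k))"
  proof (intro sum.cong refl)
    fix j assume "j \<in> {1..m}"
    then have "{j+1..Suc m} = insert (j+1) {j+2..Suc m}" by auto
    then show "(\<Sum>k=j+1..Suc m. T j k) = T j (j+1) + (\<Sum>k=j+2..Suc m. T j k)" by simp
  qed
  also have "\<dots> = (\<Sum>j=1..m. T j (j+1)) + (\<Sum>j=1..m. \<Sum>k=j+2..Suc m. T j k)" by (simp add: sum.distrib)
  also have "(\<Sum>j=1..m. \<Sum>k=j+2..Suc m. T j k) = (\<Sum>j=1..m-1. \<Sum>k=j+2..Suc m. T j k)"
  proof (cases m)
    case 0 then show ?thesis by simp
  next
    case (Suc m') then show ?thesis by simp
  qed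
  finally show ?thesis .
qed


lemma q_identity:
  fixes b h :: "nat \<Rightarrow> complex" and m :: nat
  assumes m: "1 \<le> m" and b1: "b 1 = 0" and bl: "b (Suc m) = 0"
  shows "(\<Sum>k=1..Suc m. b k * h k) + (\<Sum>k=1..Suc m. b k * h k * h k) + (\<Sum>j=1..m. (b j + b (j+1)) * h j * h (j+1))
       = (\<Sum>i=2..m. b i * (h i * (h (i - 1) + h i + h (i + 1) + 1)))"
proof -
  have b1': "b (Suc 0) = 0" using b1 by simp
  define f where "f i = b i * (h i * (h (i - 1) + h i + h (i + 1) + 1))" for i
  have "(\<Sum>i=1..Suc m. f i) = f 1 + (\<Sum>i=2..m. f i) + f (Suc m)"
  proof -
    have "(\<Sum>i=1..Suc m. f i) = (\<Sum>i=1..m. f i) + f (Suc m)" by simp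
    moreover have "(\<Sum>i=1..m. f i) = f 1 + (\<Sum>i=Suc 1..m. f i)" using m by (rule sum.atLeast_Suc_atMost)
    ultimately show ?thesis by (simp add: numeral_2_eq_2)
  qed
  then have R: "(\<Sum>i=2..m. f i) = (\<Sum>i=1..Suc m. f i)" by (simp add: f_def b1' bl)
  have D: "(\<Sum>i=1..Suc m. f i) = (\<Sum>i=1..Suc m. b i * h (i - 1) * h i) + (\<Sum>k=1..Suc m. b k * h k * h k)
        + (\<Sum>i=1..Suc m. b i * h i * h (i+1)) + (\<Sum>k=1..Suc m. b k * h k)"
    unfolding f_def by (simp add: sum.distrib algebra_simps)
  have S1: "(\<Sum>j=1..m. b j * h j * h (j+1)) = (\<Sum>i=1..Suc m. b i * h i * h (i+1))" by (simp add: bl)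
  have S2: "(\<Sum>j=1..m. b (j+1) * h j * h (j+1)) = (\<Sum>i=1..Suc m. b i * h (i - 1) * h i)"
  proof -
    have "(\<Sum>i=Suc 1..Suc m. b i * h (i - 1) * h i) = (\<Sum>j=1..m. b (Suc j) * h (Suc j - 1) * h (Suc j))"
      by (rule sum.shift_bounds_cl_Suc_ivl)
    moreover have "(\<Sum>i=1..Suc m. b i * h (i - 1) * h i) = b 1 * h 0 * h 1 + (\<Sum>i=Suc 1..Suc m. b i * h (i - 1) * h i)"
      by (subst sum.atLeast_Suc_atMost) auto
    ultimately show ?thesis by (simp add: b1')
  qed
  have "(\<Sum>j=1..m. (b j + b (j+1)) * h j * h (j+1)) = (\<Sum>j=1..m. b j * h j * h (j+1)) + (\<Sum>j=1..m. b (j+1) * h j * h (j+1))"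
    by (simp add: sum.distrib algebra_simps)
  then show ?thesis unfolding f_def[symmetric] R D S1 S2 by (simp add: algebra_simps)
qed


lemma quad_span:
  fixes l :: nat and F :: "(nat \<Rightarrow> complex) \<Rightarrow> complex"
  assumes l3: "3 \<le> l" and Q: "Quad l F"
    and Z: "\<And>k s. F (\<lambda>i. if i = k then -1 - s else if i = k + 1 then s else 0) = 0"
  shows "\<exists>c. F = (\<lambda>h. \<Sum>k\<in>Ind l. c k * bfun k h)"
proof -
  obtain c0 b a where F: "\<forall>x. F x = c0 + (\<Sum>k=1..l. b k * x k) + (\<Sum>j=1..l. \<Sum>k=1..l. a j k * x j * x k)"
    using Q unfolding Quad_def by blast
  have E: "0 = c0 + ((if k \<in> {1..l} then b k * (-1-s) else 0) + (if k+1 \<in> {1..l} then b (k+1) * s else 0))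
     + ((if k \<in> {1..l} then ((if k \<in> {1..l} then a k k * (-1-s) else 0) + (if k+1 \<in> {1..l} then a k (k+1) * s else 0)) * (-1-s) else 0)
      + (if k+1 \<in> {1..l} then ((if k \<in> {1..l} then a (k+1) k * (-1-s) else 0) + (if k+1 \<in> {1..l} then a (k+1) (k+1) * s else 0)) * s else 0))"
    (is "_ = ?R") for k s
  proof -
    have "(\<lambda>i. if i = k then -1 - s else if i = k + 1 then s else 0) = (\<lambda>i. (if i = k then -1-s else 0) + (if i = k+1 then s else 0))"
      by auto
    then have "0 = F (\<lambda>i. (if i = k then -1-s else 0) + (if i = k+1 then s else 0))" using Z[of k s] by simp
    also have "\<dots> = c0 + (\<Sum>k'=1..l. b k' * ((if k' = k then -1-s else 0) + (if k' = k+1 then s else 0)))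
       + (\<Sum>j=1..l. \<Sum>k'=1..l. a j k' * ((if j = k then -1-s else 0) + (if j = k+1 then s else 0)) * ((if k' = k then -1-s else 0) + (if k' = k+1 then s else 0)))"
      using F by simp
    also have "\<dots> = ?R"
      using lin_eval[where p=k and q="k+1" and l=l and b=b and u="-1-s" and v=s]
        quad_eval[where p=k and q="k+1" and l=l and a=a and u="-1-s" and v=s] by simp
    finally show ?thesis .
  qed
  have c0: "c0 = 0" using E[of 0 0] l3 by simp
  have b1: "b 1 = 0" and a11: "a 1 1 = 0"
  proof -
    have "0 = b 1 + a 1 1" using E[of 0 1] l3 c0 by simp
    moreover have "0 = - b 1 + a 1 1" using E[of 0 "-1"] l3 c0 by simp
    ultimately show "b 1 = 0" "a 1 1 = 0" by (simp_all add: add_eq_0_iff)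
  qed
  have akk: "a k k = b k" if "k \<in> {1..l}" for k
    using E[of k 0] that c0 by (simp split: if_splits)
  have bl: "b l = 0"
  proof -
    have "0 = b l * (-2) + a l l * 4" using E[of l 1] l3 c0 by (simp add: algebra_simps)
    then show ?thesis using akk[of l] l3 by simp
  qed
  have adj: "a k (k+1) + a (k+1) k = b k + b (k+1)" if "k \<in> {1..l-1}" for k
  proof -
    have k1: "k \<in> {1..l}" "k+1 \<in> {1..l}" using that by auto
    have "0 = b k * (-2) + b (k+1) + (a k k * (-2) + a k (k+1)) * (-2) + (a (k+1) k * (-2) + a (k+1) (k+1))"
      using E[of k 1] k1 c0 by (simp add: algebra_simps)
    then have "2 * (a k (k+1) + a (k+1) k) = 2 * (b k + b (k+1))"
      using akk[OF k1(1)] akk[OF k1(2)] by (simp add: algebra_simps)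
    then show ?thesis by (metis mult_left_cancel zero_neq_numeral)
  qed
  obtain m where lm: "l = Suc m" and m2: "2 \<le> m" using l3 by (cases l) auto
  define c where "c = (\<lambda>i. case i of Pidx i j \<Rightarrow> a i j + a j i | Qidx i \<Rightarrow> b i)"
  have "F h = (\<Sum>k\<in>Ind l. c k * bfun k h)" for h
  proof -
    have "F h = (\<Sum>k=1..l. b k * h k) + (\<Sum>j=1..l. \<Sum>k=1..l. a j k * h j * h k)" using F c0 by simp
    also have "\<dots> = (\<Sum>k=1..l. b k * h k) + (\<Sum>k=1..l. a k k * h k * h k)
       + ((\<Sum>j=1..m. (a j (j+1) + a (j+1) j) * h j * h (j+1)) + (\<Sum>j=1..m-1. \<Sum>k=j+2..Suc m. (a j k + a k j) * h j * h k))"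
      unfolding dsplit lm split_adj by simp
    also have "(\<Sum>k=1..l. a k k * h k * h k) = (\<Sum>k=1..l. b k * h k * h k)"
      by (intro sum.cong refl) (simp add: akk)
    also have "(\<Sum>j=1..m. (a j (j+1) + a (j+1) j) * h j * h (j+1)) = (\<Sum>j=1..m. (b j + b (j+1)) * h j * h (j+1))"
    proof (intro sum.cong refl)
      fix j assume "j \<in> {1..m}"
      then have "a j (j+1) + a (j+1) j = b j + b (j+1)" using adj[of j] lm by simp
      then show "(a j (j+1) + a (j+1) j) * h j * h (j+1) = (b j + b (j+1)) * h j * h (j+1)" by simp
    qed
    finally have "F h = ((\<Sum>k=1..Suc m. b k * h k) + (\<Sum>k=1..Suc m. b k * h k * h k) + (\<Sum>j=1..m. (b j + b (j+1)) * h j * h (j+1)))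
        + (\<Sum>j=1..m-1. \<Sum>k=j+2..Suc m. (a j k + a k j) * h j * h k)"
      unfolding lm by (simp add: algebra_simps)
    also have "\<dots> = (\<Sum>i=2..m. b i * (h i * (h (i - 1) + h i + h (i + 1) + 1))) + (\<Sum>j=1..m-1. \<Sum>k=j+2..Suc m. (a j k + a k j) * h j * h k)"
      using q_identity[of m b h] m2 b1 bl lm by simp
    also have "\<dots> = (\<Sum>k\<in>Ind l. c k * bfun k h)"
      unfolding Ind_sum lm by (simp add: c_def mult.assoc)
    finally show ?thesis .
  qed
  then show ?thesis by blast
qed


lemma lin_indep:
  fixes l :: nat and c :: "idx \<Rightarrow> complex"
  assumes l3: "3 \<le> l" and H: "\<forall>h. (\<Sum>k\<in>Ind l. c k * bfun k h) = 0"
  shows "\<forall>k\<in>Ind l. c k = 0"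
proof -
  have cQ: "c (Qidx p) = 0" if p: "p \<in> {2..l-1}" for p
  proof -
    define h :: "nat \<Rightarrow> complex" where "h = (\<lambda>i. if i = p then 1 else 0)"
    have P0: "(\<Sum>i=1..l-2. \<Sum>j=i+2..l. c (Pidx i j) * (h i * h j)) = 0"
      by (intro sum.neutral ballI) (auto simp: h_def)
    have "(\<Sum>i=2..l-1. c (Qidx i) * (h i * (h (i - 1) + h i + h (i + 1) + 1))) = (\<Sum>i=2..l-1. if i = p then 2 * c (Qidx p) else 0)"
      using p by (intro sum.cong refl) (auto simp: h_def)
    also have "\<dots> = 2 * c (Qidx p)" using p by simp
    finally have "0 = 2 * c (Qidx p)" using H[rule_format, of h] P0 by (simp add: Ind_sum)
    then show ?thesis by simp
  qed
  have cP: "c (Pidx p q) = 0" if p: "1 \<le> p" "p \<le> l - 2" "p + 2 \<le> q" "q \<le> l" for p q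
  proof -
    define h :: "nat \<Rightarrow> complex" where "h = (\<lambda>i. if i = p \<or> i = q then 1 else 0)"
    have Q0: "(\<Sum>i=2..l-1. c (Qidx i) * (h i * (h (i - 1) + h i + h (i + 1) + 1))) = 0"
      by (intro sum.neutral ballI) (simp add: cQ)
    have "(\<Sum>i=1..l-2. \<Sum>j=i+2..l. c (Pidx i j) * (h i * h j)) = (\<Sum>i=1..l-2. if i = p then (\<Sum>j=i+2..l. if j = q then c (Pidx p q) else 0) else 0)"
    proof (intro sum.cong refl)
      fix i assume i: "i \<in> {1..l-2}"
      show "(\<Sum>j=i+2..l. c (Pidx i j) * (h i * h j)) = (if i = p then (\<Sum>j=i+2..l. if j = q then c (Pidx p q) else 0) else 0)"
      proof (cases "i = p")
        case True
        have "(\<Sum>j=i+2..l. c (Pidx i j) * (h i * h j)) = (\<Sum>j=i+2..l. if j = q then c (Pidx p q) else 0)"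
          using p True by (intro sum.cong refl) (auto simp: h_def)
        then show ?thesis using True by simp
      next
        case False
        have "(\<Sum>j=i+2..l. c (Pidx i j) * (h i * h j)) = 0"
          using p False by (intro sum.neutral ballI) (auto simp: h_def)
        then show ?thesis using False by simp
      qed
    qed
    also have "\<dots> = c (Pidx p q)" using p by simp
    finally have "0 = c (Pidx p q)" using H[rule_format, of h] Q0 by (simp add: Ind_sum)
    then show ?thesis by simp
  qed
  show ?thesis unfolding Ind_def using cP cQ by auto
qed


lemma evalS_superset:
  assumes "finite S" "{w. p w \<noteq> 0} \<subseteq> S"
  shows "evalS l x p = (\<Sum>w\<in>S. p w * prod_list (map (hval l x) w))"
  unfolding evalS_def using assms by (intro sum.mono_neutral_left) auto

lemma evalS_lin:
  assumes "fin f" "fin g"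
  shows "evalS l x (\<lambda>w. a * f w + b * g w) = a * evalS l x f + b * evalS l x g"
proof -
  let ?S = "{w. f w \<noteq> 0} \<union> {w. g w \<noteq> 0}"
  have fS: "finite ?S" using assms by (simp add: fin_def)
  have "evalS l x (\<lambda>w. a * f w + b * g w) = (\<Sum>w\<in>?S. (a * f w + b * g w) * prod_list (map (hval l x) w))"
    by (rule evalS_superset[OF fS]) auto
  moreover have "evalS l x f = (\<Sum>w\<in>?S. f w * prod_list (map (hval l x) w))" by (rule evalS_superset[OF fS]) auto
  moreover have "evalS l x g = (\<Sum>w\<in>?S. g w * prod_list (map (hval l x) w))" by (rule evalS_superset[OF fS]) auto
  ultimately show ?thesis by (simp add: sum.distrib sum_distrib_left algebra_simps)
qed

lemma evalS_add: "fin f \<Longrightarrow> fin g \<Longrightarrow> evalS l x (\<lambda>w. f w + g w) = evalS l x f + evalS l x g"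
  using evalS_lin[of f g l x 1 1] by simp
lemma evalS_diff: "fin f \<Longrightarrow> fin g \<Longrightarrow> evalS l x (\<lambda>w. f w - g w) = evalS l x f - evalS l x g"
  using evalS_lin[of f g l x 1 "-1"] by simp
lemma evalS_zero: "evalS l x (\<lambda>w. 0) = 0" by (simp add: evalS_def)
lemma evalS_if: "evalS l x (\<lambda>w. if P then g w else 0) = (if P then evalS l x g else 0)"
  by (cases P) (simp_all add: evalS_zero)
lemma fin_if: "fin g \<Longrightarrow> fin (\<lambda>w. if P then g w else 0)"
  by (cases P) (simp_all add: fin_zero)
lemma evalS_dl: "evalS l x (dl u) = prod_list (map (hval l x) u)"
proof -
  have "evalS l x (dl u) = (\<Sum>w\<in>{u}. dl u w * prod_list (map (hval l x) w))"
    by (rule evalS_superset) (auto simp: dl_def)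
  then show ?thesis by (simp add: dl_def)
qed

lemma evalS_pz: "evalS l x (pz a b c d) = hval l x (Dg c a) * hval l x (Dg d b)
   + (if d < a then hval l x (Dg d a) else 0) - (if b < a then hval l x (Dg b a) else 0)
   - (if d < c then hval l x (Dg d c) else 0) + (if b < c then hval l x (Dg b c) else 0)"
  unfolding pz_def
  by (simp add: evalS_add evalS_diff evalS_if fin_if fin_add fin_diff fin_dl evalS_dl)

lemma Dg_tr: "1 \<le> i \<Longrightarrow> 1 \<le> j \<Longrightarrow> (\<Sum>m=1..k. Dg i j m m) = (if i \<le> k then 1 else 0) - (if j \<le> k then 1 else 0)"
  by (simp add: Dg_def sum_subtractf)

lemma Dg_tr': "1 \<le> i \<Longrightarrow> 1 \<le> j \<Longrightarrow> (\<Sum>m=Suc 0..k. Dg i j m m) = (if i \<le> k then 1 else 0) - (if j \<le> k then 1 else 0)"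
  using Dg_tr by simp

lemma hval_Dg: "1 \<le> i \<Longrightarrow> 1 \<le> j \<Longrightarrow>
   hval l x (Dg i j) = (\<Sum>k=1..l. ((if i \<le> k then 1 else 0) - (if j \<le> k then 1 else 0)) * x k)"
  unfolding hval_def by (intro sum.cong refl) (simp add: Dg_tr')

lemma hv_adj: assumes "1 \<le> i" "i \<le> l" shows "hval l x (Dg (i+1) i) = - x i"
proof -
  have "hval l x (Dg (i+1) i) = (\<Sum>k=1..l. ((if i+1 \<le> k then 1 else 0) - (if i \<le> k then 1 else 0)) * x k)"
    by (rule hval_Dg) (use assms in auto)
  also have "\<dots> = (\<Sum>k=1..l. if k = i then - x k else 0)"
    using assms by (intro sum.cong refl) auto
  finally show ?thesis using assms by simp
qed

lemma hv_adj': assumes "1 \<le> i" "i \<le> l" shows "hval l x (Dg i (i+1)) = x i"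
proof -
  have "hval l x (Dg i (i+1)) = (\<Sum>k=1..l. ((if i \<le> k then 1 else 0) - (if i+1 \<le> k then 1 else 0)) * x k)"
    by (rule hval_Dg) (use assms in auto)
  also have "\<dots> = (\<Sum>k=1..l. if k = i then x k else 0)"
    using assms by (intro sum.cong refl) auto
  finally show ?thesis using assms by simp
qed

lemma hv_3: assumes "2 \<le> i" "i + 1 \<le> l"
  shows "hval l x (Dg (i+2) (i-1)) = - (x (i-1) + x i + x (i+1))"
proof -
  have "hval l x (Dg (i+2) (i-1)) = (\<Sum>k=1..l. ((if i+2 \<le> k then 1 else 0) - (if i-1 \<le> k then 1 else 0)) * x k)"
    by (rule hval_Dg) (use assms in auto)
  also have "\<dots> = (\<Sum>k=1..l. if k \<in> {i-1, i, i+1} then - x k else 0)"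
    using assms by (intro sum.cong refl) auto
  also have "\<dots> = (\<Sum>k\<in>{1..l} \<inter> {i-1, i, i+1}. - x k)" by (simp add: sum.inter_restrict)
  also have "{1..l} \<inter> {i-1, i, i+1} = {i-1, i, i+1}" using assms by auto
  also have "(\<Sum>k\<in>{i-1, i, i+1}. - x k) = - x (i-1) - x i - x (i+1)"
  proof -
    have ne: "i - 1 \<notin> {i, i+1}" "i \<notin> {i+1}" using assms by auto
    have "(\<Sum>k\<in>insert (i-1) (insert i {i+1}). - x k) = - x (i-1) + (- x i + - x (i+1))"
      by (subst sum.insert, simp, use ne in simp)+ simp
    then show ?thesis by simp
  qed
  finally show ?thesis by simp
qed

lemma hv_2: assumes "2 \<le> i" "i \<le> l"
  shows "hval l x (Dg (i-1) (i+1)) = x (i-1) + x i"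
proof -
  have "hval l x (Dg (i-1) (i+1)) = (\<Sum>k=1..l. ((if i-1 \<le> k then 1 else 0) - (if i+1 \<le> k then 1 else 0)) * x k)"
    by (rule hval_Dg) (use assms in auto)
  also have "\<dots> = (\<Sum>k=1..l. if k \<in> {i-1, i} then x k else 0)"
    using assms by (intro sum.cong refl) auto
  also have "\<dots> = (\<Sum>k\<in>{1..l} \<inter> {i-1, i}. x k)" by (simp add: sum.inter_restrict)
  also have "{1..l} \<inter> {i-1, i} = {i-1, i}" using assms by auto
  also have "(\<Sum>k\<in>{i-1, i}. x k) = x (i-1) + x i"
    using assms by simp
  finally show ?thesis by simp
qed

lemma eval_P: assumes "1 \<le> i" "i + 2 \<le> j" "j \<le> l"
  shows "evalS l x (pz i j (i+1) (j+1)) = bfun (Pidx i j) x"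
proof -
  have "hval l x (Dg (i+1) i) = - x i" "hval l x (Dg (j+1) j) = - x j"
    using assms hv_adj[of i l x] hv_adj[of j l x] by auto
  then show ?thesis using assms by (simp add: evalS_pz)
qed

lemma eval_Q: assumes "2 \<le> i" "i + 1 \<le> l"
  shows "evalS l x (pz i (i-1) (i+1) (i+2)) = bfun (Qidx i) x"
proof -
  have "hval l x (Dg (i-1) i) = x (i-1)" using hv_adj'[of "i-1" l x] assms by simp
  moreover have "hval l x (Dg (i+1) i) = - x i" using assms hv_adj[of i l x] by auto
  moreover have "hval l x (Dg (i+2) (i-1)) = - (x (i-1) + x i + x (i+1))" using assms hv_3[of i l x] by auto
  moreover have "hval l x (Dg (i-1) (i+1)) = x (i-1) + x i" using assms hv_2[of i l x] by auto
  moreover have "i - 1 < i + 1" "i - 1 < i" "\<not> i + 2 < i" "\<not> i + 2 < i + 1" using assms by auto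
  ultimately show ?thesis using assms by (simp only: evalS_pz if_True if_False bfun.simps) (simp add: algebra_simps)
qed

lemma eval_3: "evalS 3 x (pz 1 2 3 4) = bfun (Pidx 1 3) x + bfun (Qidx 2) x"
  by (simp add: evalS_pz hval_Dg eval_nat_numeral algebra_simps)


lemma Sh_fin: "p \<in> Sh n \<Longrightarrow> fin p" by (auto simp: Sh_def intro: FA_fin)

lemma Sh_lin: assumes "p \<in> Sh n" "q \<in> Sh n" shows "(\<lambda>w. a * p w + b * q w) \<in> Sh n"
proof -
  have "fin (\<lambda>w. a * p w + b * q w)" using assms by (intro fin_lin Sh_fin)
  moreover have "set w \<subseteq> h_set n" if "a * p w + b * q w \<noteq> 0" for w
  proof -
    have "p w \<noteq> 0 \<or> q w \<noteq> 0" using that by auto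
    then show ?thesis using assms by (auto simp: Sh_def)
  qed
  ultimately show ?thesis by (auto simp: Sh_def FA_def fin_def dest: h_g)
qed

lemma R0_lin: assumes "r \<in> R0 l" "s \<in> R0 l" shows "(\<lambda>w. a * r w + b * s w) \<in> R0 l"
proof -
  have rs: "r \<in> Rt l" "s \<in> Rt l" using assms by (auto simp: R0_def)
  have "(\<lambda>w. a * r w + b * s w) \<in> Rt l"
    using Rt.add[OF Rt_smul'[OF rs(1)] Rt_smul'[OF rs(2)]] by (simp add: fa_add_def)
  moreover have "ad H (\<lambda>w. a * r w + b * s w) \<in> Iid (Suc l)" if H: "H \<in> h_set (Suc l)" for H
  proof -
    have "ad H r \<in> Iid (Suc l)" "ad H s \<in> Iid (Suc l)" using assms H by (auto simp: R0_def)
    then have "(\<lambda>w. a * ad H r w + b * ad H s w) \<in> Iid (Suc l)" by (intro Iid_add' Iid_smul')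
    then show ?thesis by (simp add: ad_lin[OF Rt_fin[OF rs(1)] Rt_fin[OF rs(2)]])
  qed
  ultimately show ?thesis by (simp add: R0_def)
qed

lemma P0_lin: assumes "f \<in> P0 l" "g \<in> P0 l" shows "(\<lambda>x. a * f x + b * g x) \<in> P0 l"
proof -
  obtain r p where r: "r \<in> R0 l" "p \<in> Sh (Suc l)" "fa_diff r p \<in> Jn (Suc l)" "f = (\<lambda>x. evalS l x p)"
    using assms(1) by (auto simp: P0_def)
  obtain s q where s: "s \<in> R0 l" "q \<in> Sh (Suc l)" "fa_diff s q \<in> Jn (Suc l)" "g = (\<lambda>x. evalS l x q)"
    using assms(2) by (auto simp: P0_def)
  have "(\<lambda>w. a * r w + b * s w) \<in> R0 l" by (rule R0_lin[OF r(1) s(1)])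
  moreover have "(\<lambda>w. a * p w + b * q w) \<in> Sh (Suc l)" by (rule Sh_lin[OF r(2) s(2)])
  moreover have "fa_diff (\<lambda>w. a * r w + b * s w) (\<lambda>w. a * p w + b * q w) \<in> Jn (Suc l)"
  proof -
    have "(\<lambda>w. a * fa_diff r p w + b * fa_diff s q w) \<in> Jn (Suc l)" by (intro Jn_add' Jn_smul' r(3) s(3))
    then show ?thesis by (simp add: fa_diff_def algebra_simps)
  qed
  moreover have "(\<lambda>x. a * f x + b * g x) = (\<lambda>x. evalS l x (\<lambda>w. a * p w + b * q w))"
    using r(4) s(4) evalS_lin[OF Sh_fin[OF r(2)] Sh_fin[OF s(2)]] by simp
  ultimately show ?thesis unfolding P0_def by auto
qed

lemma P0_zero: "(\<lambda>x. 0) \<in> P0 l"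
proof -
  have "(\<lambda>w. 0) \<in> R0 l"
    using Rt.ideal[OF Iid.zero] by (simp add: R0_def ad_def fa_diff_def fa_mul_zero_left fa_mul_zero_right Iid.zero)
  moreover have "(\<lambda>w. 0) \<in> Sh (Suc l)" by (simp add: Sh_def FA_def)
  moreover have "fa_diff (\<lambda>w. 0) (\<lambda>w. 0) \<in> Jn (Suc l)" by (simp add: fa_diff_def Jn.zero)
  moreover have "(\<lambda>x. 0) = (\<lambda>x. evalS l x (\<lambda>w. 0))" by (simp add: evalS_zero)
  ultimately have "\<exists>r\<in>R0 l. \<exists>p\<in>Sh (Suc l). fa_diff r p \<in> Jn (Suc l) \<and> (\<lambda>x. 0) = (\<lambda>x. evalS l x p)" by blast
  then show ?thesis unfolding P0_def by simp
qed

lemma P0_sum: "(\<And>k. k \<in> I \<Longrightarrow> F k \<in> P0 l) \<Longrightarrow> (\<lambda>x. \<Sum>k\<in>I. c k * F k x) \<in> P0 l"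
proof (induction I rule: infinite_finite_induct)
  case (infinite A) then show ?case by (simp add: P0_zero)
next
  case empty then show ?case by (simp add: P0_zero)
next
  case (insert i I)
  then have "(\<lambda>x. c i * F i x + 1 * (\<Sum>k\<in>I. c k * F k x)) \<in> P0 l" by (intro P0_lin) auto
  then show ?case using insert(1,2) by simp
qed

lemma zr_P0: assumes "RM l a b c d" shows "(\<lambda>x. evalS l x (pz a b c d)) \<in> P0 l"
proof -
  have d: "distinct [a,b,c,d]" and r: "a \<in> {1..Suc l}" "b \<in> {1..Suc l}" "c \<in> {1..Suc l}" "d \<in> {1..Suc l}"
    using assms by (auto simp: RM_def)
  show ?thesis unfolding P0_def using zr_R0[OF assms] pz_Sh[OF d r] zr_Jn[OF assms] by auto
qed

lemma bfun_P0: assumes l3: "3 \<le> l" and k: "k \<in> Ind l" shows "bfun k \<in> P0 l"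
proof (cases "l = 3")
  case True
  have s: "RM 3 1 2 4 3" using RM_start[of 3] by simp
  have s1: "RM 3 1 2 3 4" by (rule rm_swc[OF s])
  have s2: "RM 3 2 1 3 4" by (rule rm_swr[OF s1])
  have q: "bfun (Qidx 2) \<in> P0 3"
  proof -
    have "(\<lambda>x. evalS 3 x (pz 2 (2-1) (2+1) (2+2))) \<in> P0 3" using zr_P0[OF s2] by simp
    moreover have "(\<lambda>x. evalS 3 x (pz 2 (2-1) (2+1) (2+2))) = bfun (Qidx 2)"
      by (rule ext, rule eval_Q) auto
    ultimately show ?thesis by simp
  qed
  have pq: "(\<lambda>x. bfun (Pidx 1 3) x + bfun (Qidx 2) x) \<in> P0 3"
    using zr_P0[OF s1] eval_3 by simp
  have "(\<lambda>x. 1 * (bfun (Pidx 1 3) x + bfun (Qidx 2) x) + (-1) * bfun (Qidx 2) x) \<in> P0 3"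
    by (rule P0_lin[OF pq q])
  moreover have "(\<lambda>x. 1 * (bfun (Pidx 1 3) x + bfun (Qidx 2) x) + (-1) * bfun (Qidx 2) x) = bfun (Pidx 1 3)"
    by (rule ext) simp
  ultimately have p: "bfun (Pidx 1 3) \<in> P0 3" by simp
  have "Ind 3 = {Pidx 1 3, Qidx 2}" by (auto simp: Ind_def)
  then show ?thesis using k p q True by auto
next
  case False
  then have l4: "4 \<le> l" using l3 by simp
  have s: "RM l 1 2 (Suc l) l" by (rule RM_start[OF l3])
  consider (P) i j where "k = Pidx i j" "1 \<le> i" "i \<le> l - 2" "i + 2 \<le> j" "j \<le> l"
    | (Q) i where "k = Qidx i" "2 \<le> i" "i \<le> l - 1"
    using k unfolding Ind_def by auto
  then show ?thesis
  proof cases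
    case P
    have "RM l i j (i+1) (j+1)" by (rule rm_all[OF l4 s]) (use P in auto)
    moreover have "(\<lambda>x. evalS l x (pz i j (i+1) (j+1))) = bfun (Pidx i j)" using P by (intro ext eval_P) auto
    ultimately show ?thesis using zr_P0 P by metis
  next
    case Q
    have "RM l i (i-1) (i+1) (i+2)" by (rule rm_all[OF l4 s]) (use Q in auto)
    moreover have "(\<lambda>x. evalS l x (pz i (i-1) (i+1) (i+2))) = bfun (Qidx i)" using Q by (intro ext eval_Q) auto
    ultimately show ?thesis using zr_P0 Q by metis
  qed
qed

lemma Gu_Quad: "Quad l (Gu l u)"
proof -
  have "Quad l (\<lambda>x. gw l x w)" for w
  proof (cases w)
    case Nil then show ?thesis by (simp add: Quad_const)
  next
    case (Cons X w1)
    show ?thesis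
    proof (cases w1)
      case Nil then show ?thesis using Cons by (simp add: Quad_hval)
    next
      case (Cons Y w2)
      show ?thesis
      proof (cases w2)
        case Nil then show ?thesis using Cons \<open>w = X # w1\<close> by (simp add: Quad_add Quad_hval Quad_hval2)
      next
        case (Cons Z w3) then show ?thesis using \<open>w1 = Y # w2\<close> \<open>w = X # w1\<close> by (simp add: Quad_const)
      qed
    qed
  qed
  then show ?thesis unfolding Gu_def
    using Quad_sum[of l "{w. u w \<noteq> 0}" "\<lambda>w x. u w * gw l x w"] by (simp add: Quad_const Quad_smul)
qed

lemma P0_upper: assumes l3: "3 \<le> l" and f: "f \<in> P0 l" shows "\<exists>c. f = (\<lambda>h. \<Sum>k\<in>Ind l. c k * bfun k h)"
proof -
  obtain r p where r: "r \<in> R0 l" "p \<in> Sh (Suc l)" "fa_diff r p \<in> Jn (Suc l)" and fp: "f = (\<lambda>x. evalS l x p)"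
    using f by (auto simp: P0_def)
  have rt: "r \<in> Rt l" using r(1) by (simp add: R0_def)
  obtain u where u: "U2 (Suc l) u" "(\<lambda>w. r w - u w) \<in> Iid (Suc l)" using Rt_U2[OF rt l3] by blast
  have fG: "f = Gu l u" using evalS_Gu[OF rt r(2) r(3) u] fp by auto
  have Z: "Gu l u (\<lambda>i. if i = k then -1 - s else if i = k + 1 then s else 0) = 0" for k s
  proof -
    have "mu (Suc 0) (\<lambda>_. k) (\<lambda>_. s) = (\<lambda>i. if i = k then -1 - s else if i = k + 1 then s else 0)"
      by (rule ext) (simp add: mu_1)
    then show ?thesis using key_zero[OF rt l3 u, of "\<lambda>_. k" "\<lambda>_. s"] by simp
  qed
  show ?thesis using quad_span[OF l3 Gu_Quad Z] fG by simp
qed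

theorem lemma5p4:
  fixes l :: nat
  assumes "l \<ge> 3"
  shows "(\<forall>c :: idx \<Rightarrow> complex. (\<forall>h. (\<Sum>k\<in>Ind l. c k * bfun k h) = 0) \<longrightarrow> (\<forall>k\<in>Ind l. c k = 0))
       \<and> P0 l = {f. \<exists>c :: idx \<Rightarrow> complex. f = (\<lambda>h. \<Sum>k\<in>Ind l. c k * bfun k h)}"
proof (intro conjI allI impI)
  fix c :: "idx \<Rightarrow> complex"
  assume "\<forall>h. (\<Sum>k\<in>Ind l. c k * bfun k h) = 0"
  then show "\<forall>k\<in>Ind l. c k = 0" using lin_indep[OF assms] by blast
next
  show "P0 l = {f. \<exists>c :: idx \<Rightarrow> complex. f = (\<lambda>h. \<Sum>k\<in>Ind l. c k * bfun k h)}"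
  proof
    show "P0 l \<subseteq> {f. \<exists>c :: idx \<Rightarrow> complex. f = (\<lambda>h. \<Sum>k\<in>Ind l. c k * bfun k h)}"
      using P0_upper[OF assms] by blast
  next
    show "{f. \<exists>c :: idx \<Rightarrow> complex. f = (\<lambda>h. \<Sum>k\<in>Ind l. c k * bfun k h)} \<subseteq> P0 l"
    proof
      fix f assume "f \<in> {f. \<exists>c :: idx \<Rightarrow> complex. f = (\<lambda>h. \<Sum>k\<in>Ind l. c k * bfun k h)}"
      then obtain c :: "idx \<Rightarrow> complex" where f: "f = (\<lambda>h. \<Sum>k\<in>Ind l. c k * bfun k h)" by blast
      have "(\<lambda>h. \<Sum>k\<in>Ind l. c k * bfun k h) \<in> P0 l" by (rule P0_sum) (rule bfun_P0[OF assms])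
      then show "f \<in> P0 l" using f by simp
    qed
  qed
qed


end
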